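(* Let $\Pi$ and $\Pi'$ be $n$-dimensional linear spaces, both satisfying the exchange axiom and the axiom (P2), let $k\ge 1$ with $n\ge 2k+1$, and let $f$ be an injection of $\mathcal{G}_k(\Pi)$ to $\mathcal{G}_k(\Pi')$ sending base subsets to base subsets. For each $(k-1)$-dimensional subspace $S$ of $\Pi$ let $f_{k-1}(S)$ be the unique subspace $S'$ of $\Pi'$ of dimension $k-1$ or $k+1$ with $f(\mathcal{G}_k(S))\subset\mathcal{G}_k(S')$. Suppose there is a strong embedding $g$ of $\Pi$ to $\Pi'$ with $f_{k-1}(S)=\overline{g(S)}$ for all $S\in\mathcal{G}_{k-1}(\Pi)$. Then $f(U)=\overline{g(U)}$ for all $U\in\mathcal{G}_k(\Pi)$.
   Context: A linear space $\Pi=(P,\mathcal{L})$ is a set $P$ of points with a family $\mathcal{L}$ of proper subsets (lines) such that each line has at least two points and any two distinct points $p,q$ lie on exactly one line $pq$. Points are collinear if some line contains them. A subspace is a set $S\subset P$ with $pq\subset S$ for all distinct $p,q\in S$; $\overline{X}$ is the smallest subspace containing $X$. A set $X$ is independent if $\overline{X}$ is not spanned by a proper subset of $X$; a base of $\Pi$ is an independent set spanning $P$. A subspace is $m$-dimensional if $m+1$ is the smallest number of points spanning it. Exchange axiom: for every $X\subset P$ and $p_1,p_2\in P\setminus\overline{X}$, $p_2\in\overline{X\cup\{p_1\}}$ implies $p_1\in\overline{X\cup\{p_2\}}$. Axiom (P2): every line has at least three points. $\mathcal{G}_k(\Pi)$ is the set of $k$-dimensional subspaces; for a subspace $U$, $\mathcal{G}_k(U)$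 is the set of $k$-dimensional subspaces incident to $U$ (contained in $U$ or containing $U$). The base subset of $\mathcal{G}_k(\Pi)$ associated with a base $B$ is the set of all $k$-dimensional subspaces spanned by points of $B$. A strong embedding of $\Pi$ to $\Pi'$ is an injection $g:P\to P'$ sending collinear triples to collinear triples, non-collinear triples to non-collinear triples and independent sets to independent sets; then $\dim\overline{g(S)}=\dim S$ for every subspace $S$. *)

theory Defs
  imports Main
begin

definition linear_space :: "'p set \<Rightarrow> 'p set set \<Rightarrow> bool" where
  "linear_space P L \<longleftrightarrow>
     (\<forall>l\<in>L. l \<subset> P \<and> (\<exists>a b. a \<in> l \<and> b \<in> l \<and> a \<noteq> b)) \<and>
     (\<forall>p\<in>P. \<forall>q\<in>P. p \<noteq> q \<longrightarrow> (\<exists>!l. l \<in> L \<and> p \<in> l \<and> q \<in> l))"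

definition ls_line :: "'p set set \<Rightarrow> 'p \<Rightarrow> 'p \<Rightarrow> 'p set" where
  "ls_line L p q = (THE l. l \<in> L \<and> p \<in> l \<and> q \<in> l)"

definition ls_collinear :: "'p set set \<Rightarrow> 'p set \<Rightarrow> bool" where
  "ls_collinear L X \<longleftrightarrow> (\<exists>l\<in>L. X \<subseteq> l)"

definition ls_subspace :: "'p set \<Rightarrow> 'p set set \<Rightarrow> 'p set \<Rightarrow> bool" where
  "ls_subspace P L S \<longleftrightarrow> S \<subseteq> P \<and>
     (\<forall>p\<in>S. \<forall>q\<in>S. p \<noteq> q \<longrightarrow> ls_line L p q \<subseteq> S)"

text \<open>The smallest subspace containing X (closure \<open>overline X\<close>).\<close>
definition ls_span :: "'p set \<Rightarrow> 'p set set \<Rightarrow> 'p set \<Rightarrow> 'p set" where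
  "ls_span P L X = \<Inter>{S. ls_subspace P L S \<and> X \<subseteq> S}"

definition ls_independent :: "'p set \<Rightarrow> 'p set set \<Rightarrow> 'p set \<Rightarrow> bool" where
  "ls_independent P L X \<longleftrightarrow> X \<subseteq> P \<and> (\<forall>Y. Y \<subset> X \<longrightarrow> ls_span P L Y \<noteq> ls_span P L X)"

definition ls_base :: "'p set \<Rightarrow> 'p set set \<Rightarrow> 'p set \<Rightarrow> bool" where
  "ls_base P L B \<longleftrightarrow> ls_independent P L B \<and> ls_span P L B = P"

text \<open>S is an m-dimensional subspace: m+1 is the smallest number of points spanning S.\<close>
definition ls_has_dim :: "'p set \<Rightarrow> 'p set set \<Rightarrow> 'p set \<Rightarrow> nat \<Rightarrow> bool" where
  "ls_has_dim P L S m \<longleftrightarrow> ls_subspace P L S \<and>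
     (\<exists>X. finite X \<and> X \<subseteq> S \<and> ls_span P L X = S \<and> card X = m + 1) \<and>
     (\<forall>X. finite X \<and> X \<subseteq> S \<and> ls_span P L X = S \<longrightarrow> m + 1 \<le> card X)"

definition exchange_axiom :: "'p set \<Rightarrow> 'p set set \<Rightarrow> bool" where
  "exchange_axiom P L \<longleftrightarrow>
     (\<forall>X p1 p2. X \<subseteq> P \<longrightarrow> p1 \<in> P - ls_span P L X \<longrightarrow> p2 \<in> P - ls_span P L X \<longrightarrow>
        p2 \<in> ls_span P L (X \<union> {p1}) \<longrightarrow> p1 \<in> ls_span P L (X \<union> {p2}))"

definition axiom_P2 :: "'p set set \<Rightarrow> bool" where
  "axiom_P2 L \<longleftrightarrow> (\<forall>l\<in>L. \<exists>a b c. a \<in> l \<and> b \<in> l \<and> c \<in> l \<and> a \<noteq> b \<and> a \<noteq> c \<and> b \<noteq> c)"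

definition Grass :: "'p set \<Rightarrow> 'p set set \<Rightarrow> nat \<Rightarrow> 'p set set" where
  "Grass P L k = {S. ls_has_dim P L S k}"

definition Grass_inc :: "'p set \<Rightarrow> 'p set set \<Rightarrow> nat \<Rightarrow> 'p set \<Rightarrow> 'p set set" where
  "Grass_inc P L k U = {S \<in> Grass P L k. S \<subseteq> U \<or> U \<subseteq> S}"

definition base_subset :: "'p set \<Rightarrow> 'p set set \<Rightarrow> nat \<Rightarrow> 'p set \<Rightarrow> 'p set set" where
  "base_subset P L k B = {S \<in> Grass P L k. \<exists>X. X \<subseteq> B \<and> S = ls_span P L X}"

definition is_base_subset :: "'p set \<Rightarrow> 'p set set \<Rightarrow> nat \<Rightarrow> 'p set set \<Rightarrow> bool" where
  "is_base_subset P L k \<B> \<longleftrightarrow> (\<exists>B. ls_base P L B \<and> \<B> = base_subset P L k B)"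

definition strong_embedding ::
  "'p set \<Rightarrow> 'p set set \<Rightarrow> 'q set \<Rightarrow> 'q set set \<Rightarrow> ('p \<Rightarrow> 'q) \<Rightarrow> bool" where
  "strong_embedding P L P' L' g \<longleftrightarrow>
     inj_on g P \<and> g ` P \<subseteq> P' \<and>
     (\<forall>a\<in>P. \<forall>b\<in>P. \<forall>c\<in>P. ls_collinear L {a, b, c} \<longrightarrow> ls_collinear L' {g a, g b, g c}) \<and>
     (\<forall>a\<in>P. \<forall>b\<in>P. \<forall>c\<in>P. \<not> ls_collinear L {a, b, c} \<longrightarrow> \<not> ls_collinear L' {g a, g b, g c}) \<and>
     (\<forall>X. X \<subseteq> P \<longrightarrow> ls_independent P L X \<longrightarrow> ls_independent P' L' (g ` X))"

definition f_lower ::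
  "'p set \<Rightarrow> 'p set set \<Rightarrow> 'q set \<Rightarrow> 'q set set \<Rightarrow> nat \<Rightarrow> ('p set \<Rightarrow> 'q set) \<Rightarrow> 'p set \<Rightarrow> 'q set" where
  "f_lower P L P' L' k f S = (THE S'. (ls_has_dim P' L' S' (k - 1) \<or> ls_has_dim P' L' S' (k + 1)) \<and>
        f ` Grass_inc P L k S \<subseteq> Grass_inc P' L' k S')"

end

theory Submission
  imports Defs
begin

locale lsp =
  fixes P :: "'p set" and L :: "'p set set" and n :: nat
  assumes ls: "linear_space P L" and ex: "exchange_axiom P L" and dimP: "ls_has_dim P L P n"
begin

abbreviation "sp \<equiv> ls_span P L"
abbreviation "indep \<equiv> ls_independent P L"
abbreviation "subsp \<equiv> ls_subspace P L"
abbreviation "hdim \<equiv> ls_has_dim P L"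

lemma ls_c1: "\<forall>l\<in>L. l \<subset> P \<and> (\<exists>a b. a \<in> l \<and> b \<in> l \<and> a \<noteq> b)"
  using ls unfolding linear_space_def by (rule conjunct1)

lemma ls_c2: "\<forall>p\<in>P. \<forall>q\<in>P. p \<noteq> q \<longrightarrow> (\<exists>!l. l \<in> L \<and> p \<in> l \<and> q \<in> l)"
  using ls unfolding linear_space_def by (rule conjunct2)

lemma lines_sub: "l \<in> L \<Longrightarrow> l \<subseteq> P"
  using ls_c1 by blast

lemma ex1_line: "p \<in> P \<Longrightarrow> q \<in> P \<Longrightarrow> p \<noteq> q \<Longrightarrow> \<exists>!l. l \<in> L \<and> p \<in> l \<and> q \<in> l"
  using ls_c2 by blast

lemma line_props:
  assumes "p \<in> P" "q \<in> P" "p \<noteq> q"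
  shows "ls_line L p q \<in> L \<and> p \<in> ls_line L p q \<and> q \<in> ls_line L p q"
proof -
  have "\<exists>!l. l \<in> L \<and> p \<in> l \<and> q \<in> l" using ex1_line assms by blast
  then show ?thesis unfolding ls_line_def by (rule theI')
qed

lemma line_unique:
  assumes "l \<in> L" "p \<in> l" "q \<in> l" "p \<noteq> q"
  shows "ls_line L p q = l"
proof -
  have "l \<subseteq> P" using lines_sub assms by blast
  then have "\<exists>!l. l \<in> L \<and> p \<in> l \<and> q \<in> l" using ex1_line assms by blast
  moreover have "l \<in> L \<and> p \<in> l \<and> q \<in> l" using assms by blast
  ultimately show ?thesis unfolding ls_line_def by (rule the1_equality)
qed

lemma subsp_P: "subsp P"
  unfolding ls_subspace_def using line_props lines_sub by blast

lemma subsp_sub: "subsp S \<Longrightarrow> S \<subseteq> P"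
  unfolding ls_subspace_def by blast

lemma subsp_Inter: "\<SS> \<noteq> {} \<Longrightarrow> \<forall>S\<in>\<SS>. subsp S \<Longrightarrow> subsp (\<Inter>\<SS>)"
  unfolding ls_subspace_def by blast

lemma subsp_Int: "subsp V \<Longrightarrow> subsp W \<Longrightarrow> subsp (V \<inter> W)"
  unfolding ls_subspace_def by blast

lemma span_subsp: "X \<subseteq> P \<Longrightarrow> subsp (sp X)"
  unfolding ls_span_def by (rule subsp_Inter) (use subsp_P in auto)

lemma span_sup: "X \<subseteq> P \<Longrightarrow> X \<subseteq> sp X"
  unfolding ls_span_def by blast

lemma span_P: "X \<subseteq> P \<Longrightarrow> sp X \<subseteq> P"
  unfolding ls_span_def using subsp_P by blast

lemma span_least: "subsp S \<Longrightarrow> X \<subseteq> S \<Longrightarrow> sp X \<subseteq> S"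
  unfolding ls_span_def by blast

lemma span_of_subsp: "subsp S \<Longrightarrow> sp S = S"
  using span_least span_sup subsp_sub by blast

lemma span_mono: "X \<subseteq> Y \<Longrightarrow> Y \<subseteq> P \<Longrightarrow> sp X \<subseteq> sp Y"
proof -
  assume a: "X \<subseteq> Y" "Y \<subseteq> P"
  have "X \<subseteq> sp Y" using a span_sup[of Y] by blast
  then show ?thesis using span_least[OF span_subsp[OF a(2)]] by blast
qed

lemma span_sub_span: "X \<subseteq> sp Y \<Longrightarrow> Y \<subseteq> P \<Longrightarrow> sp X \<subseteq> sp Y"
  using span_least span_subsp by blast

lemma span_span: "X \<subseteq> P \<Longrightarrow> sp (sp X) = sp X"
  using span_of_subsp span_subsp by blast

lemma span_empty: "sp {} = {}"
proof -
  have "subsp {}" unfolding ls_subspace_def by blast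
  then show ?thesis using span_of_subsp by blast
qed

lemma span_single: "p \<in> P \<Longrightarrow> sp {p} = {p}"
proof -
  assume "p \<in> P"
  then have "subsp {p}" unfolding ls_subspace_def by blast
  then show ?thesis using span_of_subsp by blast
qed

lemma line_in_span:
  assumes "p \<in> P" "q \<in> P" "p \<noteq> q" "X \<subseteq> P" "p \<in> sp X" "q \<in> sp X"
  shows "ls_line L p q \<subseteq> sp X"
proof -
  have "subsp (sp X)" using span_subsp[OF assms(4)] .
  then show ?thesis using assms(3,5,6) unfolding ls_subspace_def by blast
qed

lemma span_Un_span: "X \<subseteq> P \<Longrightarrow> Y \<subseteq> P \<Longrightarrow> sp (sp X \<union> sp Y) = sp (X \<union> Y)"
proof
  assume a: "X \<subseteq> P" "Y \<subseteq> P"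
  show "sp (sp X \<union> sp Y) \<subseteq> sp (X \<union> Y)"
    apply (rule span_sub_span)
    using span_mono[of X "X \<union> Y"] span_mono[of Y "X \<union> Y"] a by auto
  show "sp (X \<union> Y) \<subseteq> sp (sp X \<union> sp Y)"
    apply (rule span_mono) using span_sup a span_P by auto
qed

lemma span_insert_span: "X \<subseteq> P \<Longrightarrow> p \<in> sp X \<Longrightarrow> sp (insert p X) = sp X"
proof -
  assume a: "X \<subseteq> P" "p \<in> sp X"
  have "insert p X \<subseteq> sp X" using a span_sup[OF a(1)] by blast
  then have "sp (insert p X) \<subseteq> sp X" using span_sub_span a(1) by blast
  moreover have "insert p X \<subseteq> P" using a span_P by blast
  then have "sp X \<subseteq> sp (insert p X)" using span_mono by blast
  ultimately show ?thesis by blast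
qed

end

context lsp begin

lemma exch: "X \<subseteq> P \<Longrightarrow> p1 \<in> P \<Longrightarrow> p1 \<notin> sp X \<Longrightarrow> p2 \<in> P \<Longrightarrow> p2 \<notin> sp X
   \<Longrightarrow> p2 \<in> sp (X \<union> {p1}) \<Longrightarrow> p1 \<in> sp (X \<union> {p2})"
proof -
  assume a: "X \<subseteq> P" "p1 \<in> P" "p1 \<notin> sp X" "p2 \<in> P" "p2 \<notin> sp X" "p2 \<in> sp (X \<union> {p1})"
  have "\<forall>X p1 p2. X \<subseteq> P \<longrightarrow> p1 \<in> P - sp X \<longrightarrow> p2 \<in> P - sp X \<longrightarrow>
        p2 \<in> sp (X \<union> {p1}) \<longrightarrow> p1 \<in> sp (X \<union> {p2})" using ex unfolding exchange_axiom_def .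
  then have "X \<subseteq> P \<longrightarrow> p1 \<in> P - sp X \<longrightarrow> p2 \<in> P - sp X \<longrightarrow>
        p2 \<in> sp (X \<union> {p1}) \<longrightarrow> p1 \<in> sp (X \<union> {p2})" by blast
  then show ?thesis using a by blast
qed

lemma indep_sub_P: "indep I \<Longrightarrow> I \<subseteq> P"
  by (simp add: ls_independent_def)

lemma indep_iff: "indep I \<longleftrightarrow> I \<subseteq> P \<and> (\<forall>x\<in>I. x \<notin> sp (I - {x}))"
proof
  assume a: "indep I"
  have IP: "I \<subseteq> P" using a unfolding ls_independent_def by blast
  show "I \<subseteq> P \<and> (\<forall>x\<in>I. x \<notin> sp (I - {x}))"
  proof -
    { fix x assume x: "x \<in> I" "x \<in> sp (I - {x})"
      have P1: "I - {x} \<subseteq> P" using IP by blast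
      have "I - {x} \<subseteq> sp (I - {x})" using span_sup[OF P1] .
      then have "I \<subseteq> sp (I - {x})" using x by blast
      then have "sp I \<subseteq> sp (I - {x})" using span_sub_span P1 by blast
      moreover have "sp (I - {x}) \<subseteq> sp I" using span_mono[of "I - {x}" I] IP by blast
      ultimately have "sp (I - {x}) = sp I" by blast
      moreover have "I - {x} \<subset> I" using x by blast
      ultimately have False using a unfolding ls_independent_def by blast }
    then show ?thesis using IP by blast
  qed
next
  assume a: "I \<subseteq> P \<and> (\<forall>x\<in>I. x \<notin> sp (I - {x}))"
  show "indep I" unfolding ls_independent_def
  proof (intro conjI allI impI)
    show "I \<subseteq> P" using a by blast
    fix Y assume Y: "Y \<subset> I"
    then obtain x where x: "x \<in> I" "x \<notin> Y" by blast
    show "sp Y \<noteq> sp I"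
    proof
      assume e: "sp Y = sp I"
      have "x \<in> sp I" using x a span_sup[of I] by blast
      then have "x \<in> sp Y" using e by simp
      moreover have "sp Y \<subseteq> sp (I - {x})" using span_mono[of Y "I - {x}"] Y x a by blast
      ultimately show False using a x by blast
    qed
  qed
qed

lemma indep_notin: "indep I \<Longrightarrow> x \<in> I \<Longrightarrow> x \<notin> sp (I - {x})"
  using indep_iff by blast

lemma indep_subset: "indep I \<Longrightarrow> J \<subseteq> I \<Longrightarrow> indep J"
proof -
  assume a: "indep I" "J \<subseteq> I"
  have IP: "I \<subseteq> P" using a indep_sub_P by blast
  { fix x assume x: "x \<in> J"
    have "sp (J - {x}) \<subseteq> sp (I - {x})" using span_mono[of "J - {x}" "I - {x}"] a IP by blast
    then have "x \<notin> sp (J - {x})" using indep_notin[OF a(1)] x a(2) by blast }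
  then show ?thesis using indep_iff IP a(2) by blast
qed

lemma indep_insert:
  assumes I: "indep I" and p: "p \<in> P" "p \<notin> sp I"
  shows "indep (insert p I)"
proof -
  have IP: "I \<subseteq> P" using I indep_sub_P by blast
  have pI: "p \<notin> I" using p span_sup[OF IP] by blast
  { fix x assume x: "x \<in> insert p I"
    have "x \<notin> sp (insert p I - {x})"
    proof (cases "x = p")
      case True
      then have "insert p I - {x} = I" using pI by blast
      then show ?thesis using p True by simp
    next
      case False
      then have xI: "x \<in> I" using x by blast
      define X0 where "X0 = I - {x}"
      have X0P: "X0 \<subseteq> P" using IP X0_def by blast
      have e1: "insert p I - {x} = X0 \<union> {p}" using False X0_def by blast
      have e2: "X0 \<union> {x} = I" using xI X0_def by blast
      have xn: "x \<notin> sp X0" using indep_notin[OF I xI] X0_def by simp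
      have "sp X0 \<subseteq> sp I" using span_mono[of X0 I] IP X0_def by blast
      then have pn: "p \<notin> sp X0" using p by blast
      show ?thesis
      proof
        assume "x \<in> sp (insert p I - {x})"
        then have "x \<in> sp (X0 \<union> {p})" using e1 by simp
        then have "p \<in> sp (X0 \<union> {x})" using exch[OF X0P p(1) pn _ xn] xI IP by blast
        then show False using e2 p by simp
      qed
    qed }
  then show ?thesis using indep_iff IP p by blast
qed

lemma min_lemma:
  assumes "finite R"
  shows "A \<union> R \<subseteq> P \<Longrightarrow> x \<in> sp (A \<union> R) \<Longrightarrow> x \<notin> sp A \<Longrightarrow>
    \<exists>y\<in>R. \<exists>R0 \<subseteq> R. y \<notin> R0 \<and> x \<notin> sp (A \<union> R0) \<and> x \<in> sp (A \<union> R0 \<union> {y})"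
  using assms
proof (induction R rule: finite_induct)
  case empty
  then show ?case by simp
next
  case (insert r R')
  show ?case
  proof (cases "x \<in> sp (A \<union> R')")
    case True
    then obtain y R0 where "y \<in> R'" "R0 \<subseteq> R'" "y \<notin> R0" "x \<notin> sp (A \<union> R0)" "x \<in> sp (A \<union> R0 \<union> {y})"
      using insert by blast
    then show ?thesis by blast
  next
    case False
    have "A \<union> R' \<union> {r} = A \<union> insert r R'" by blast
    then show ?thesis using False insert by (intro bexI[of _ r] exI[of _ R']) auto
  qed
qed

lemma exch_lemma:
  assumes I: "indep I" and Y: "finite Y" "Y \<subseteq> P" and IY: "I \<subseteq> sp Y" and x: "x \<in> I" "x \<notin> Y"
  shows "\<exists>y \<in> Y - I. I \<subseteq> sp (insert x (Y - {y}))"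
proof -
  have IP: "I \<subseteq> P" using I indep_sub_P by blast
  define C where "C = Y \<inter> I"
  define R where "R = Y - I"
  have CP: "C \<subseteq> P" using C_def Y by blast
  have "sp C \<subseteq> sp (I - {x})" using span_mono[of C "I - {x}"] C_def x IP by blast
  then have xC: "x \<notin> sp C" using indep_notin[OF I x(1)] by blast
  have "Y = C \<union> R" using C_def R_def by blast
  then have xCR: "x \<in> sp (C \<union> R)" using IY x by auto
  have "finite R" using R_def Y by simp
  then obtain y R0 where yR0: "y \<in> R" "R0 \<subseteq> R" "y \<notin> R0" "x \<notin> sp (C \<union> R0)" "x \<in> sp (C \<union> R0 \<union> {y})"
    using min_lemma[of R C x] xCR xC Y \<open>Y = C \<union> R\<close> by blast
  define X where "X = C \<union> R0"
  have XP: "X \<subseteq> P" using X_def yR0 R_def C_def Y by blast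
  have yP: "y \<in> P" using yR0 R_def Y by blast
  have xP: "x \<in> P" using x IP by blast
  have yX: "y \<notin> sp X"
  proof
    assume "y \<in> sp X"
    then have "sp (insert y X) = sp X" using span_insert_span XP by blast
    moreover have "insert y X = C \<union> R0 \<union> {y}" using X_def by blast
    ultimately show False using yR0 X_def by simp
  qed
  have "y \<in> sp (X \<union> {x})"
    using exch[OF XP yP yX xP] yR0(4,5) X_def by blast
  moreover have "X \<union> {x} \<subseteq> insert x (Y - {y})" using X_def C_def R_def yR0 by blast
  moreover have IQ: "insert x (Y - {y}) \<subseteq> P" using xP Y by blast
  ultimately have "y \<in> sp (insert x (Y - {y}))" using span_mono[of "X \<union> {x}" "insert x (Y - {y})"] by blast
  moreover have "Y - {y} \<subseteq> sp (insert x (Y - {y}))" using span_sup[OF IQ] by blast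
  ultimately have "Y \<subseteq> sp (insert x (Y - {y}))" by blast
  then have "sp Y \<subseteq> sp (insert x (Y - {y}))" using span_sub_span IQ by blast
  then show ?thesis using IY yR0(1) R_def by blast
qed

lemma steinitz_fin:
  "finite I \<Longrightarrow> indep I \<Longrightarrow> finite Y \<Longrightarrow> Y \<subseteq> P \<Longrightarrow> I \<subseteq> sp Y \<Longrightarrow> card I \<le> card Y"
proof (induction "card (I - Y)" arbitrary: Y rule: less_induct)
  case less
  show ?case
  proof (cases "I \<subseteq> Y")
    case True
    then show ?thesis using card_mono less by blast
  next
    case False
    then obtain x where x: "x \<in> I" "x \<notin> Y" by blast
    obtain y where y: "y \<in> Y - I" "I \<subseteq> sp (insert x (Y - {y}))"
      using exch_lemma[OF less(3,4,5,6) x] by blast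
    define Y' where "Y' = insert x (Y - {y})"
    have fY': "finite Y'" using Y'_def less by simp
    have Y'P: "Y' \<subseteq> P" using Y'_def less x indep_sub_P by blast
    have cY: "card Y' = card Y"
    proof -
      have "card Y' = Suc (card (Y - {y}))" using Y'_def x less by simp
      moreover have "card (Y - {y}) = card Y - 1" using y less by (simp add: card_Diff_singleton)
      moreover have "card Y \<ge> 1" using y less card_0_eq by fastforce
      ultimately show ?thesis by simp
    qed
    have "I - Y' = (I - Y) - {x}" using Y'_def y by blast
    then have "card (I - Y') < card (I - Y)" using x less
      by (metis DiffI card_Diff1_less finite_Diff)
    then have "card I \<le> card Y'" using less fY' Y'P y Y'_def by blast
    then show ?thesis using cY by simp
  qed
qed

lemma hdim_D1: "hdim S m \<Longrightarrow> subsp S"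
  unfolding ls_has_dim_def by (rule conjunct1)

lemma hdim_D2: "hdim S m \<Longrightarrow> \<exists>X. finite X \<and> X \<subseteq> S \<and> sp X = S \<and> card X = m + 1"
  unfolding ls_has_dim_def by (drule conjunct2, rule conjunct1)

lemma hdim_D3: "hdim S m \<Longrightarrow> finite X \<Longrightarrow> X \<subseteq> S \<Longrightarrow> sp X = S \<Longrightarrow> m + 1 \<le> card X"
  unfolding ls_has_dim_def by (drule conjunct2, drule conjunct2, blast)

lemma dimP_wit: obtains X0 where "finite X0" "X0 \<subseteq> P" "sp X0 = P" "card X0 = n + 1"
  using hdim_D2[OF dimP] by blast

lemma indep_finite: "indep I \<Longrightarrow> finite I"
proof (rule ccontr)
  assume a: "indep I" "infinite I"
  obtain X0 where X0: "finite X0" "X0 \<subseteq> P" "sp X0 = P" "card X0 = n + 1" using dimP_wit by blast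
  obtain I0 where I0: "I0 \<subseteq> I" "finite I0" "card I0 = n + 2" using infinite_arbitrarily_large[OF a(2)] by blast
  have "indep I0" using indep_subset a I0 by blast
  moreover have "I0 \<subseteq> sp X0" using X0 I0 a indep_sub_P by blast
  ultimately have "card I0 \<le> card X0" using steinitz_fin I0 X0 by blast
  then show False using I0 X0 by simp
qed

lemma steinitz: "indep I \<Longrightarrow> finite Y \<Longrightarrow> Y \<subseteq> P \<Longrightarrow> I \<subseteq> sp Y \<Longrightarrow> card I \<le> card Y"
  using steinitz_fin indep_finite by blast

lemma indep_card_le: "indep I \<Longrightarrow> card I \<le> n + 1"
proof -
  assume a: "indep I"
  obtain X0 where X0: "finite X0" "X0 \<subseteq> P" "sp X0 = P" "card X0 = n + 1" using dimP_wit by blast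
  have "I \<subseteq> sp X0" using X0 a indep_sub_P by blast
  then show ?thesis using steinitz a X0 by fastforce
qed

lemma hdim_imp:
  assumes a: "hdim S m"
  shows "\<exists>X. indep X \<and> card X = m + 1 \<and> sp X = S"
proof -
  obtain X where X: "finite X" "X \<subseteq> S" "sp X = S" "card X = m + 1" using hdim_D2[OF a] by blast
  have SP: "S \<subseteq> P" using hdim_D1[OF a] subsp_sub by blast
  have XP: "X \<subseteq> P" using X(2) SP by (rule order_trans)
  have nx: "x \<notin> sp (X - {x})" if x: "x \<in> X" for x
  proof
    assume x2: "x \<in> sp (X - {x})"
    have P1: "X - {x} \<subseteq> P" using XP by blast
    have "X - {x} \<subseteq> sp (X - {x})" using span_sup[OF P1] .
    then have "X \<subseteq> sp (X - {x})" using x2 by blast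
    then have "sp X \<subseteq> sp (X - {x})" using span_sub_span P1 by blast
    moreover have "sp (X - {x}) \<subseteq> sp X" using span_mono[of "X - {x}" X] XP by blast
    ultimately have e: "sp (X - {x}) = S" using X(3) by simp
    have "m + 1 \<le> card (X - {x})" 
      by (rule hdim_D3[OF a]) (use X e in auto)
    moreover have "card (X - {x}) < card X" using X(1) x by (rule card_Diff1_less)
    ultimately show False using X(4) by simp
  qed
  have "indep X" unfolding indep_iff using XP nx by blast
  then show ?thesis using X by blast
qed

lemma imp_hdim:
  assumes X: "indep X" "card X = m + 1"
  shows "hdim (sp X) m"
proof -
  have XP: "X \<subseteq> P" using X indep_sub_P by blast
  have fX: "finite X" using X indep_finite by blast
  show ?thesis unfolding ls_has_dim_def
  proof (intro conjI)
    show "subsp (sp X)" using span_subsp XP by blast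
    have "X \<subseteq> sp X" using span_sup[OF XP] .
    then show "\<exists>X'. finite X' \<and> X' \<subseteq> sp X \<and> sp X' = sp X \<and> card X' = m + 1"
      using X fX by blast
    show "\<forall>X'. finite X' \<and> X' \<subseteq> sp X \<and> sp X' = sp X \<longrightarrow> m + 1 \<le> card X'"
    proof (intro allI impI)
      fix X' assume a: "finite X' \<and> X' \<subseteq> sp X \<and> sp X' = sp X"
      have "sp X \<subseteq> P" using XP span_P by blast
      then have X'P: "X' \<subseteq> P" using a by blast
      have "X \<subseteq> sp X'" using a span_sup[OF XP] by simp
      then have "card X \<le> card X'" using steinitz[OF X(1)] a X'P by blast
      then show "m + 1 \<le> card X'" using X by simp
    qed
  qed
qed

lemma hdim_iff: "hdim S m \<longleftrightarrow> (\<exists>X. indep X \<and> card X = m + 1 \<and> sp X = S)"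
  using hdim_imp imp_hdim by blast

lemma hdim_unique: "hdim S a \<Longrightarrow> hdim S b \<Longrightarrow> a = b"
proof -
  assume a: "hdim S a" and b: "hdim S b"
  obtain X where X: "finite X" "X \<subseteq> S" "sp X = S" "card X = a + 1" using hdim_D2[OF a] by blast
  obtain Y where Y: "finite Y" "Y \<subseteq> S" "sp Y = S" "card Y = b + 1" using hdim_D2[OF b] by blast
  have "a + 1 \<le> card Y" using hdim_D3[OF a] Y by blast
  moreover have "b + 1 \<le> card X" using hdim_D3[OF b] X by blast
  ultimately show ?thesis using X Y by simp
qed

lemma hdim_subsp: "hdim S m \<Longrightarrow> subsp S"
  by (rule hdim_D1)

lemma hdim_P: "hdim S m \<Longrightarrow> S \<subseteq> P"
  using hdim_subsp subsp_sub by blast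

lemma hdim_span: "indep X \<Longrightarrow> card X = m + 1 \<Longrightarrow> hdim (sp X) m"
  by (rule imp_hdim)

lemma dim_mono: "hdim V a \<Longrightarrow> hdim W b \<Longrightarrow> V \<subseteq> W \<Longrightarrow> a \<le> b"
proof -
  assume a: "hdim V a" "hdim W b" "V \<subseteq> W"
  obtain I where I: "indep I" "card I = a + 1" "sp I = V" using hdim_imp[OF a(1)] by blast
  obtain J where J: "indep J" "card J = b + 1" "sp J = W" using hdim_imp[OF a(2)] by blast
  have "I \<subseteq> V" using I span_sup indep_sub_P by blast
  then have "I \<subseteq> sp J" using a J by blast
  then have "card I \<le> card J" using steinitz I J indep_finite indep_sub_P by blast
  then show ?thesis using I J by simp
qed

lemma dim_eq_sub: "hdim V m \<Longrightarrow> hdim W m \<Longrightarrow> V \<subseteq> W \<Longrightarrow> V = W"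
proof (rule ccontr)
  assume a: "hdim V m" "hdim W m" "V \<subseteq> W" "V \<noteq> W"
  then obtain w where w: "w \<in> W" "w \<notin> V" by blast
  obtain I where I: "indep I" "card I = m + 1" "sp I = V" using hdim_imp[OF a(1)] by blast
  obtain J where J: "indep J" "card J = m + 1" "sp J = W" using hdim_imp[OF a(2)] by blast
  have wP: "w \<in> P" using w a hdim_P by blast
  have ind: "indep (insert w I)" using indep_insert[OF I(1) wP] w I by blast
  have "I \<subseteq> V" using I span_sup indep_sub_P by blast
  then have "w \<notin> I" using w by blast
  then have c: "card (insert w I) = m + 2" using I indep_finite by simp
  have "insert w I \<subseteq> sp J" using \<open>I \<subseteq> V\<close> a w J by blast
  then have "card (insert w I) \<le> card J" using steinitz ind J indep_finite indep_sub_P by blast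
  then show False using c J by simp
qed

lemma squeeze:
  assumes A: "hdim A m" and W: "hdim W (Suc m)" and V: "subsp V" "A \<subseteq> V" "V \<subseteq> W" "A \<noteq> V"
  shows "V = W"
proof -
  obtain v where v: "v \<in> V" "v \<notin> A" using V by blast
  obtain I where I: "indep I" "card I = m + 1" "sp I = A" using hdim_imp[OF A] by blast
  have vP: "v \<in> P" using v V subsp_sub by blast
  have ind: "indep (insert v I)" using indep_insert[OF I(1) vP] v I by blast
  have IA: "I \<subseteq> A" using I span_sup indep_sub_P by blast
  then have "v \<notin> I" using v by blast
  then have c: "card (insert v I) = Suc m + 1" using I indep_finite by simp
  have h: "hdim (sp (insert v I)) (Suc m)" using hdim_span[OF ind c] .
  have "sp (insert v I) \<subseteq> V" using span_least[OF V(1)] IA V v by blast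
  then have "sp (insert v I) = W" using dim_eq_sub[OF h W] V by blast
  then show ?thesis using \<open>sp (insert v I) \<subseteq> V\<close> V by blast
qed

end

context lsp begin

lemma extend:
  assumes "indep I" "I \<subseteq> S" "subsp S"
  shows "\<exists>J. indep J \<and> I \<subseteq> J \<and> J \<subseteq> S \<and> sp J = S"
  using assms
proof (induction "n + 1 - card I" arbitrary: I rule: less_induct)
  case less
  have IP: "I \<subseteq> P" using indep_sub_P[OF less.prems(1)] .
  have sI: "sp I \<subseteq> S" using span_least[OF less.prems(3,2)] .
  show ?case
  proof (cases "sp I = S")
    case True
    then show ?thesis using less.prems by blast
  next
    case False
    then obtain s where s: "s \<in> S" "s \<notin> sp I" using sI by blast
    have sP: "s \<in> P" using s(1) subsp_sub[OF less.prems(3)] by blast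
    have ind: "indep (insert s I)" using indep_insert[OF less.prems(1) sP s(2)] .
    have "s \<notin> I" using s span_sup[OF IP] by blast
    then have "card (insert s I) = Suc (card I)" using indep_finite[OF less.prems(1)] by simp
    moreover have "card (insert s I) \<le> n + 1" using indep_card_le[OF ind] .
    ultimately have lt: "n + 1 - card (insert s I) < n + 1 - card I" by simp
    have sub: "insert s I \<subseteq> S" using s(1) less.prems(2) by blast
    obtain J where "indep J" "insert s I \<subseteq> J" "J \<subseteq> S" "sp J = S"
      using less.hyps[OF lt ind sub less.prems(3)] by blast
    then show ?thesis by blast
  qed
qed

lemma indep_span_inter: "indep B \<Longrightarrow> Z \<subseteq> B \<Longrightarrow> B \<inter> sp Z = Z"
proof -
  assume a: "indep B" "Z \<subseteq> B"
  have BP: "B \<subseteq> P" using a indep_sub_P by blast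
  { fix b assume b: "b \<in> B" "b \<in> sp Z" "b \<notin> Z"
    have "sp Z \<subseteq> sp (B - {b})" using span_mono[of Z "B - {b}"] a b BP by blast
    then have False using indep_notin[OF a(1) b(1)] b by blast }
  moreover have "Z \<subseteq> sp Z" using span_sup a BP by blast
  ultimately show ?thesis using a by blast
qed

lemma span_inter_indep:
  assumes I: "indep I" and XI: "X \<subseteq> I" and YI: "Y \<subseteq> I"
  shows "sp X \<inter> sp Y = sp (X \<inter> Y)"
proof
  have IP: "I \<subseteq> P" using indep_sub_P[OF I] .
  have XP: "X \<subseteq> P" using XI IP by (rule order_trans)
  have YP: "Y \<subseteq> P" using YI IP by (rule order_trans)
  have "sp (X \<inter> Y) \<subseteq> sp X" using span_mono[of "X \<inter> Y" X] XP by blast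
  moreover have "sp (X \<inter> Y) \<subseteq> sp Y" using span_mono[of "X \<inter> Y" Y] YP by blast
  ultimately show "sp (X \<inter> Y) \<subseteq> sp X \<inter> sp Y" by (rule Int_greatest)
  have fI: "finite I" using indep_finite[OF I] .
  show "sp X \<inter> sp Y \<subseteq> sp (X \<inter> Y)"
    using XI
  proof (induction "card (X - Y)" arbitrary: X rule: less_induct)
    case less
    show ?case
    proof (cases "X \<subseteq> Y")
      case True
      then have "X \<inter> Y = X" by blast
      then show ?thesis by simp
    next
      case False
      then obtain x where x: "x \<in> X" "x \<notin> Y" by blast
      define X0 where "X0 = X - {x}"
      have X0I: "X0 \<subseteq> I" using X0_def less.prems by blast
      have X0P: "X0 \<subseteq> P" using X0I IP by (rule order_trans)
      have fX: "finite X" using less.prems fI finite_subset by blast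
      have e0: "X0 - Y = (X - Y) - {x}" using X0_def by blast
      have xx: "x \<in> X - Y" using x by blast
      have ff: "finite (X - Y)" using fX by simp
      have "card ((X - Y) - {x}) < card (X - Y)" using ff xx by (rule card_Diff1_less)
      then have lt: "card (X0 - Y) < card (X - Y)" using e0 by simp
      have IH: "sp X0 \<inter> sp Y \<subseteq> sp (X0 \<inter> Y)" using less.hyps[OF lt X0I] .
      have e: "X0 \<inter> Y = X \<inter> Y" using X0_def x by blast
      show ?thesis
      proof
        fix q assume q: "q \<in> sp X \<inter> sp Y"
        show "q \<in> sp (X \<inter> Y)"
        proof (cases "q \<in> sp X0")
          case True
          then have "q \<in> sp (X0 \<inter> Y)" using IH q by blast
          then show ?thesis using e by simp
        next
          case False
          have xI: "x \<in> I" using x less.prems by blast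
          have xP: "x \<in> P" using xI IP by blast
          have qP: "q \<in> P" using q span_P[OF YP] by blast
          have "X0 \<subseteq> I - {x}" using X0_def less.prems by blast
          then have "sp X0 \<subseteq> sp (I - {x})" using span_mono[of X0 "I - {x}"] IP by blast
          then have xn: "x \<notin> sp X0" using indep_notin[OF I xI] by blast
          have "X0 \<union> {x} = X" using X0_def x by blast
          then have "q \<in> sp (X0 \<union> {x})" using q by simp
          then have xq: "x \<in> sp (X0 \<union> {q})" using exch[OF X0P xP xn qP False] by blast
          have X0YP: "X0 \<union> Y \<subseteq> P" using X0P YP by blast
          have "sp Y \<subseteq> sp (X0 \<union> Y)" using span_mono[of Y "X0 \<union> Y"] X0YP by blast
          moreover have "X0 \<subseteq> sp (X0 \<union> Y)" using span_sup[OF X0YP] by blast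
          ultimately have "X0 \<union> {q} \<subseteq> sp (X0 \<union> Y)" using q by blast
          then have s1: "sp (X0 \<union> {q}) \<subseteq> sp (X0 \<union> Y)" using span_sub_span X0YP by blast
          have "X0 \<union> Y \<subseteq> I - {x}" using X0_def less.prems YI x by blast
          then have s2: "sp (X0 \<union> Y) \<subseteq> sp (I - {x})" using span_mono[of "X0 \<union> Y" "I - {x}"] IP by blast
          have "x \<in> sp (I - {x})" using xq s1 s2 by blast
          then show ?thesis using indep_notin[OF I xI] by blast
        qed
      qed
    qed
  qed
qed

lemma span_Inter_indep:
  assumes I: "indep I" and F: "finite F" "F \<noteq> {}" "\<forall>Z\<in>F. Z \<subseteq> I"
  shows "\<Inter>(sp ` F) = sp (\<Inter>F)"
  using F
proof (induction F rule: finite_ne_induct)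
  case (singleton x)
  then show ?case by simp
next
  case (insert Z F)
  have "\<Inter>(sp ` insert Z F) = sp Z \<inter> \<Inter>(sp ` F)" by simp
  also have "\<dots> = sp Z \<inter> sp (\<Inter>F)" using insert by simp
  also have "\<dots> = sp (Z \<inter> \<Inter>F)" using span_inter_indep[OF I, of Z "\<Inter>F"] insert by blast
  finally show ?case by simp
qed

end

lemma card_ins_le: "finite A \<Longrightarrow> card (insert x A) \<le> Suc (card A)"
  by (simp add: card_insert_if)

lemma card_le3: "card {a, b, c} \<le> 3"
proof -
  have "card {a, b, c} \<le> Suc (card {b, c})" by (rule card_ins_le) simp
  moreover have "card {b, c} \<le> Suc (card {c})" by (rule card_ins_le) simp
  ultimately show ?thesis by simp
qed

lemma finite_insert_3: "finite {a, b, c}" by simp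

lemma big_diff:
  assumes fB: "finite B" and cB: "card B = N" and cA: "card A \<le> c" and fA: "finite A"
  shows "N - c \<le> card (B - A)"
proof -
  have "card B \<le> card (B - A) + card A"
  proof -
    have "B \<subseteq> (B - A) \<union> A" by blast
    then have "card B \<le> card ((B - A) \<union> A)" using fB fA by (intro card_mono) auto
    also have "\<dots> \<le> card (B - A) + card A" by (rule card_Un_le)
    finally show ?thesis .
  qed
  then show ?thesis using cB cA by linarith
qed

context lsp begin

lemma base_D: "ls_base P L B \<Longrightarrow> indep B" "ls_base P L B \<Longrightarrow> sp B = P"
  by (simp_all add: ls_base_def)

lemma base_I: "indep B \<Longrightarrow> sp B = P \<Longrightarrow> ls_base P L B"
  by (simp add: ls_base_def)

lemma hdim_nonempty: "hdim S m \<Longrightarrow> S \<noteq> {}"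
proof
  assume a: "hdim S m" "S = {}"
  obtain X where X: "indep X" "card X = m + 1" "sp X = S" using hdim_imp[OF a(1)] by blast
  have "X \<subseteq> sp X" using span_sup indep_sub_P[OF X(1)] by blast
  then have "X = {}" using X a by blast
  then show False using X by simp
qed

lemma indep_hdim_card: "indep X \<Longrightarrow> hdim (sp X) m \<Longrightarrow> card X = m + 1"
proof -
  assume a: "indep X" "hdim (sp X) m"
  have "sp X \<noteq> {}" using hdim_nonempty[OF a(2)] .
  then have "X \<noteq> {}" using span_empty by auto
  then have c: "card X \<noteq> 0" using indep_finite[OF a(1)] by simp
  then have "card X = (card X - 1) + 1" by simp
  then have "hdim (sp X) (card X - 1)" using imp_hdim[OF a(1)] by simp
  then have "card X - 1 = m" using hdim_unique a(2) by blast
  then show ?thesis using c by simp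
qed

lemma base_card: "ls_base P L B \<Longrightarrow> finite B \<and> card B = n + 1"
proof -
  assume b: "ls_base P L B"
  have "hdim (sp B) n" using dimP base_D[OF b] by simp
  then have "card B = n + 1" using indep_hdim_card[OF base_D(1)[OF b]] by blast
  then show ?thesis using indep_finite[OF base_D(1)[OF b]] by blast
qed

lemma bsub_iff:
  assumes B: "ls_base P L B"
  shows "U \<in> base_subset P L k B \<longleftrightarrow> (\<exists>Z. Z \<subseteq> B \<and> card Z = k + 1 \<and> U = sp Z)"
proof
  assume "U \<in> base_subset P L k B"
  then have h: "hdim U k" and ex: "\<exists>X. X \<subseteq> B \<and> U = sp X" by (simp_all add: base_subset_def Grass_def)
  then obtain X where X: "X \<subseteq> B" "U = sp X" by blast
  have ind: "indep X" using indep_subset[OF base_D(1)[OF B] X(1)] .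
  have "hdim (sp X) k" using h X(2) by simp
  then have "card X = k + 1" using indep_hdim_card[OF ind] by blast
  then show "\<exists>Z. Z \<subseteq> B \<and> card Z = k + 1 \<and> U = sp Z" using X by blast
next
  assume "\<exists>Z. Z \<subseteq> B \<and> card Z = k + 1 \<and> U = sp Z"
  then obtain Z where Z: "Z \<subseteq> B" "card Z = k + 1" "U = sp Z" by blast
  have ind: "indep Z" using indep_subset[OF base_D(1)[OF B] Z(1)] .
  have "hdim (sp Z) k" using imp_hdim[OF ind Z(2)] .
  then have "hdim U k" using Z(3) by simp
  then show "U \<in> base_subset P L k B" unfolding base_subset_def Grass_def using Z(1,3) by blast
qed

lemma bsub_repr:
  assumes B: "ls_base P L B" and U: "U \<in> base_subset P L k B"
  shows "U = sp (B \<inter> U) \<and> card (B \<inter> U) = k + 1"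
proof -
  have "\<exists>Z. Z \<subseteq> B \<and> card Z = k + 1 \<and> U = sp Z" using U by (simp only: bsub_iff[OF B])
  then obtain Z where Z: "Z \<subseteq> B" "card Z = k + 1" "U = sp Z" by blast
  have "B \<inter> U = Z" using indep_span_inter[OF base_D(1)[OF B] Z(1)] Z(3) by simp
  then show ?thesis using Z by simp
qed

lemma bsub_Grass: "base_subset P L k B \<subseteq> Grass P L k"
  unfolding base_subset_def by blast

lemma bsub_finite:
  assumes B: "ls_base P L B"
  shows "finite (base_subset P L k B)"
proof -
  have "base_subset P L k B \<subseteq> sp ` Pow B"
  proof
    fix U assume "U \<in> base_subset P L k B"
    then have "\<exists>Z. Z \<subseteq> B \<and> card Z = k + 1 \<and> U = sp Z" by (simp only: bsub_iff[OF B])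
    then show "U \<in> sp ` Pow B" by blast
  qed
  moreover have "finite B" using base_card[OF B] by blast
  ultimately show ?thesis using finite_subset by blast
qed

definition Bij :: "nat \<Rightarrow> 'p set \<Rightarrow> 'p \<Rightarrow> 'p \<Rightarrow> 'p set set" where
  "Bij k B i j = {U \<in> base_subset P L k B. i \<in> U \<and> j \<notin> U}"

lemma mem_Bij:
  assumes B: "ls_base P L B" and Z: "Z \<subseteq> B" "card Z = k + 1" and i: "i \<in> Z" and j: "j \<in> B" "j \<notin> Z"
  shows "sp Z \<in> Bij k B i j"
proof -
  have "sp Z \<in> base_subset P L k B" unfolding bsub_iff[OF B] using Z by blast
  moreover have "i \<in> sp Z" using i span_sup[of Z] Z indep_sub_P[OF base_D(1)[OF B]] by blast
  moreover have "j \<notin> sp Z" using indep_span_inter[OF base_D(1)[OF B] Z(1)] j by blast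
  ultimately show ?thesis unfolding Bij_def by blast
qed

lemma Bij_D:
  assumes B: "ls_base P L B" and Z: "Z \<subseteq> B" and U: "sp Z \<in> Bij k B i j" and ij: "i \<in> B" "j \<in> B"
  shows "i \<in> Z \<and> j \<notin> Z"
proof -
  have "B \<inter> sp Z = Z" using indep_span_inter[OF base_D(1)[OF B] Z] .
  moreover have "i \<in> sp Z" "j \<notin> sp Z" using U unfolding Bij_def by blast+
  ultimately show ?thesis using ij Z span_sup by blast
qed

lemma Bij_sub: "Bij k B i j \<subseteq> base_subset P L k B"
  unfolding Bij_def by blast

lemma card_Bij:
  assumes B: "ls_base P L B" and ij: "i \<in> B" "j \<in> B" "i \<noteq> j"
  shows "card (Bij k B i j) = (n - 1) choose k"
proof -
  have BI: "indep B" using base_D(1)[OF B] .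
  have fB: "finite B" and cB: "card B = n + 1" using base_card[OF B] by blast+
  define Q where "Q = {Z. Z \<subseteq> B - {i, j} \<and> card Z = k}"
  have eq: "Bij k B i j = (\<lambda>Z. sp (insert i Z)) ` Q"
  proof
    show "Bij k B i j \<subseteq> (\<lambda>Z. sp (insert i Z)) ` Q"
    proof
      fix U assume U: "U \<in> Bij k B i j"
      then have Ub: "U \<in> base_subset P L k B" using Bij_sub by blast
      have r: "U = sp (B \<inter> U)" "card (B \<inter> U) = k + 1" using bsub_repr[OF B Ub] by blast+
      have iU: "i \<in> B \<inter> U" using U ij unfolding Bij_def by blast
      have jU: "j \<notin> B \<inter> U" using U ij unfolding Bij_def by blast
      define Z where "Z = (B \<inter> U) - {i}"
      have "insert i Z = B \<inter> U" using Z_def iU by blast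
      moreover have "card Z = k" using Z_def r(2) iU fB by (simp add: card_Diff_singleton)
      moreover have "Z \<subseteq> B - {i, j}" using Z_def jU by blast
      ultimately have "Z \<in> Q" "U = sp (insert i Z)" unfolding Q_def using r(1) by auto
      then show "U \<in> (\<lambda>Z. sp (insert i Z)) ` Q" by blast
    qed
    show "(\<lambda>Z. sp (insert i Z)) ` Q \<subseteq> Bij k B i j"
    proof
      fix U assume "U \<in> (\<lambda>Z. sp (insert i Z)) ` Q"
      then obtain Z where Z: "Z \<subseteq> B - {i, j}" "card Z = k" "U = sp (insert i Z)" unfolding Q_def by blast
      have fZ: "finite Z" using Z fB finite_subset by blast
      have "i \<notin> Z" using Z by blast
      then have "card (insert i Z) = k + 1" using Z fZ by simp
      moreover have "insert i Z \<subseteq> B" using Z ij by blast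
      ultimately show "U \<in> Bij k B i j" using mem_Bij[OF B, of "insert i Z" k i j] Z ij by blast
    qed
  qed
  have inj: "inj_on (\<lambda>Z. sp (insert i Z)) Q"
  proof
    fix Z1 Z2 assume Z: "Z1 \<in> Q" "Z2 \<in> Q" "sp (insert i Z1) = sp (insert i Z2)"
    have s1: "insert i Z1 \<subseteq> B" "insert i Z2 \<subseteq> B" using Z ij unfolding Q_def by blast+
    have e1: "B \<inter> sp (insert i Z1) = insert i Z1" by (rule indep_span_inter[OF BI s1(1)])
    have e2: "B \<inter> sp (insert i Z2) = insert i Z2" by (rule indep_span_inter[OF BI s1(2)])
    have "insert i Z1 = B \<inter> sp (insert i Z1)" using e1 by simp
    also have "\<dots> = B \<inter> sp (insert i Z2)" using Z(3) by simp
    also have "\<dots> = insert i Z2" using e2 .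
    finally have "insert i Z1 = insert i Z2" .
    moreover have "i \<notin> Z1" "i \<notin> Z2" using Z unfolding Q_def by blast+
    ultimately show "Z1 = Z2" by (metis Diff_insert_absorb)
  qed
  have "card (Bij k B i j) = card Q" using eq inj card_image by simp
  also have "\<dots> = card (B - {i, j}) choose k" unfolding Q_def by (rule n_subsets) (use fB in simp)
  also have "card (B - {i, j}) = n - 1" using fB cB ij by (simp add: card_Diff_subset)
  finally show ?thesis .
qed

lemma Bij_inj:
  assumes B: "ls_base P L B" and ij: "i \<in> B" "j \<in> B" "i \<noteq> j" and ij2: "i2 \<in> B" "j2 \<in> B" "i2 \<noteq> j2"
    and kn: "k + 2 \<le> n" "1 \<le> k" and e: "Bij k B i j = Bij k B i2 j2"
  shows "i = i2 \<and> j = j2"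
proof -
  have fB: "finite B" and cB: "card B = n + 1" using base_card[OF B] by blast+
  show ?thesis
  proof (cases "i = i2")
    case False
    have "n + 1 - 3 \<le> card (B - {i, j, i2})" using big_diff[OF fB cB card_le3 finite_insert_3] .
    then have "k \<le> card (B - {i, j, i2})" using kn by linarith
    then obtain Z0 where Z0: "Z0 \<subseteq> B - {i, j, i2}" "card Z0 = k" "finite Z0"
      using obtain_subset_with_card_n by metis
    have Zs: "insert i Z0 \<subseteq> B" using Z0 ij by blast
    have "i \<notin> Z0" using Z0 by blast
    then have Zc: "card (insert i Z0) = k + 1" using Z0 by simp
    have "sp (insert i Z0) \<in> Bij k B i j" using mem_Bij[OF B Zs Zc] ij Z0 by blast
    then have "sp (insert i Z0) \<in> Bij k B i2 j2" using e by simp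
    then have "i2 \<in> insert i Z0" using Bij_D[OF B Zs] ij2 by blast
    then show ?thesis using False Z0 by blast
  next
    case True
    show ?thesis
    proof (rule ccontr)
      assume "\<not> (i = i2 \<and> j = j2)"
      then have jj: "j \<noteq> j2" using True by blast
      have "n + 1 - 3 \<le> card (B - {i, j, j2})" using big_diff[OF fB cB card_le3 finite_insert_3] .
      then have "k - 1 \<le> card (B - {i, j, j2})" using kn by linarith
      then obtain Z0 where Z0: "Z0 \<subseteq> B - {i, j, j2}" "card Z0 = k - 1" "finite Z0"
        using obtain_subset_with_card_n by metis
      define Z where "Z = insert i (insert j2 Z0)"
      have Zs: "Z \<subseteq> B" using Z0 ij ij2 Z_def by blast
      have "j2 \<notin> Z0" "i \<notin> insert j2 Z0" using Z0 ij2 True by blast+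
      then have Zc: "card Z = k + 1" using Z0 kn Z_def by simp
      have "sp Z \<in> Bij k B i j" using mem_Bij[OF B Zs Zc] ij Z0 jj Z_def by blast
      then have "sp Z \<in> Bij k B i2 j2" using e by simp
      then have "j2 \<notin> Z" using Bij_D[OF B Zs] ij2 by blast
      then show False using Z_def by blast
    qed
  qed
qed

end

context lsp begin

lemma exact:
  assumes B: "ls_base P L B" and B3: "ls_base P L B3" and n1: "1 \<le> n"
    and X: "\<X> \<subseteq> base_subset P L k B" "\<X> \<subseteq> base_subset P L k B3"
    and meets: "\<forall>i\<in>B. \<forall>j\<in>B. i \<noteq> j \<longrightarrow> \<X> \<inter> Bij k B i j \<noteq> {}"
  shows "base_subset P L k B3 = base_subset P L k B"
proof -
  have BI: "indep B" using base_D(1)[OF B] .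
  have B3I: "indep B3" using base_D(1)[OF B3] .
  have fB: "finite B" and cB: "card B = n + 1" using base_card[OF B] by blast+
  have BP: "B \<subseteq> P" using indep_sub_P[OF BI] .
  have B3P: "B3 \<subseteq> P" using indep_sub_P[OF B3I] .
  have sub: "B \<subseteq> B3"
  proof
    fix b assume b: "b \<in> B"
    define Xb where "Xb = {U \<in> \<X>. b \<in> U}"
    have "card (B - {b}) = n" using fB cB b by (simp add: card_Diff_singleton)
    then have "card (B - {b}) \<noteq> 0" using n1 by simp
    then have "B - {b} \<noteq> {}" by (metis card.empty)
    then obtain j where j: "j \<in> B" "j \<noteq> b" by blast
    have bj: "b \<noteq> j" using j(2) by simp
    have "\<X> \<inter> Bij k B b j \<noteq> {}" using meets[rule_format, OF b j(1) bj] .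
    then obtain U0 where U0: "U0 \<in> \<X>" "b \<in> U0" unfolding Bij_def by blast
    have U0b: "U0 \<in> Xb" using U0 Xb_def by blast
    have Xbne: "Xb \<noteq> {}" using U0b by blast
    have fX: "finite \<X>" using X(1) bsub_finite[OF B] finite_subset by blast
    have fXb: "finite Xb" using fX Xb_def by simp
    have rB: "U = sp (B \<inter> U)" if "U \<in> Xb" for U
      using bsub_repr[OF B] that X(1) Xb_def by blast
    have rB3: "U = sp (B3 \<inter> U)" if "U \<in> Xb" for U
      using bsub_repr[OF B3] that X(2) Xb_def by blast
    have im1: "sp ` ((\<lambda>U. B \<inter> U) ` Xb) = Xb"
    proof -
      have "sp ` ((\<lambda>U. B \<inter> U) ` Xb) = (\<lambda>U. sp (B \<inter> U)) ` Xb" by (simp add: image_image)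
      also have "\<dots> = (\<lambda>U. U) ` Xb" using rB by (intro image_cong) auto
      finally show ?thesis by simp
    qed
    have im3: "sp ` ((\<lambda>U. B3 \<inter> U) ` Xb) = Xb"
    proof -
      have "sp ` ((\<lambda>U. B3 \<inter> U) ` Xb) = (\<lambda>U. sp (B3 \<inter> U)) ` Xb" by (simp add: image_image)
      also have "\<dots> = (\<lambda>U. U) ` Xb" using rB3 by (intro image_cong) auto
      finally show ?thesis by simp
    qed
    have I1: "\<Inter>((\<lambda>U. B \<inter> U) ` Xb) = {b}"
    proof
      show "{b} \<subseteq> \<Inter>((\<lambda>U. B \<inter> U) ` Xb)" using b Xb_def by blast
      show "\<Inter>((\<lambda>U. B \<inter> U) ` Xb) \<subseteq> {b}"
      proof
        fix x assume x: "x \<in> \<Inter>((\<lambda>U. B \<inter> U) ` Xb)"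
        then have xB: "x \<in> B" using U0b by blast
        show "x \<in> {b}"
        proof (rule ccontr)
          assume "x \<notin> {b}"
          then have bx: "b \<noteq> x" by simp
          have "\<X> \<inter> Bij k B b x \<noteq> {}" using meets[rule_format, OF b xB bx] .
          then obtain U where U: "U \<in> \<X>" "b \<in> U" "x \<notin> U" unfolding Bij_def by blast
          then have "U \<in> Xb" using Xb_def by blast
          then show False using x U by blast
        qed
      qed
    qed
    have "\<Inter>(sp ` ((\<lambda>U. B \<inter> U) ` Xb)) = sp (\<Inter>((\<lambda>U. B \<inter> U) ` Xb))"
      by (rule span_Inter_indep[OF BI]) (use fXb Xbne in auto)
    then have IX: "\<Inter>Xb = {b}" using im1 I1 span_single b BP by auto
    have F3ne: "(\<lambda>U. B3 \<inter> U) ` Xb \<noteq> {}" using Xbne by blast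
    have "\<Inter>(sp ` ((\<lambda>U. B3 \<inter> U) ` Xb)) = sp (\<Inter>((\<lambda>U. B3 \<inter> U) ` Xb))"
      by (rule span_Inter_indep[OF B3I]) (use fXb Xbne in auto)
    then have e3: "sp (\<Inter>((\<lambda>U. B3 \<inter> U) ` Xb)) = {b}" using im3 IX by simp
    define T where "T = \<Inter>((\<lambda>U. B3 \<inter> U) ` Xb)"
    have TB3: "T \<subseteq> B3" using T_def U0b by blast
    have "T \<subseteq> sp T" using span_sup TB3 B3P by blast
    have e3': "sp T = {b}" using e3 T_def by simp
    then have "T \<subseteq> {b}" using \<open>T \<subseteq> sp T\<close> by simp
    moreover have "T \<noteq> {}"
    proof
      assume "T = {}"
      then have "sp T = {}" using span_empty by simp
      then show False using e3' by simp
    qed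
    ultimately have "b \<in> T" by blast
    then show "b \<in> B3" using TB3 by blast
  qed
  have "B = B3"
  proof (rule ccontr)
    assume "B \<noteq> B3"
    then have "B \<subset> B3" using sub by blast
    then have "sp B \<noteq> sp B3" using B3I unfolding ls_independent_def by blast
    then show False using base_D(2)[OF B] base_D(2)[OF B3] by simp
  qed
  then show ?thesis by simp
qed

lemma inexact:
  assumes B: "ls_base P L B" and P2: "axiom_P2 L" and ij: "i \<in> B" "j \<in> B" "i \<noteq> j" and kn: "k + 1 \<le> n"
  shows "\<exists>B2. ls_base P L B2 \<and> base_subset P L k B - Bij k B i j \<subseteq> base_subset P L k B2
     \<and> base_subset P L k B2 \<noteq> base_subset P L k B"
proof -
  have BI: "indep B" using base_D(1)[OF B] .
  have BP: "B \<subseteq> P" using indep_sub_P[OF BI] .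
  have fB: "finite B" and cB: "card B = n + 1" using base_card[OF B] by blast+
  have iP: "i \<in> P" and jP: "j \<in> P" using ij BP by blast+
  define l where "l = ls_line L i j"
  have l: "l \<in> L" "i \<in> l" "j \<in> l" using line_props[OF iP jP ij(3)] l_def by blast+
  have "\<exists>a b c. a \<in> l \<and> b \<in> l \<and> c \<in> l \<and> a \<noteq> b \<and> a \<noteq> c \<and> b \<noteq> c"
    using P2 l(1) unfolding axiom_P2_def by blast
  then obtain a b c where abc: "a \<in> l" "b \<in> l" "c \<in> l" "a \<noteq> b" "a \<noteq> c" "b \<noteq> c" by blast
  have "\<exists>c\<in>l. c \<noteq> i \<and> c \<noteq> j" using abc by metis
  then obtain c where c: "c \<in> l" "c \<noteq> i" "c \<noteq> j" by blast
  have cP: "c \<in> P" using c l lines_sub by blast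
  have ijP: "{i, j} \<subseteq> P" using iP jP by blast
  have "i \<in> sp {i, j}" "j \<in> sp {i, j}" using span_sup[OF ijP] by blast+
  then have "l \<subseteq> sp {i, j}" using line_in_span[OF iP jP ij(3) ijP] l_def by blast
  then have csp: "c \<in> sp {i, j}" using c by blast
  have ijB: "{i, j} \<subseteq> B" using ij by blast
  have cnB: "c \<notin> B"
  proof
    assume "c \<in> B"
    then have "c \<in> B \<inter> sp {i, j}" using csp by blast
    then show False using indep_span_inter[OF BI ijB] c by blast
  qed
  define X0 where "X0 = B - {i}"
  have X0B: "X0 \<subseteq> B" using X0_def by blast
  have X0P: "X0 \<subseteq> P" using X0B BP by blast
  have X0I: "indep X0" using indep_subset[OF BI X0B] .
  have cX0: "c \<notin> sp X0"
  proof
    assume "c \<in> sp X0"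
    then have "c \<in> sp X0 \<inter> sp {i, j}" using csp by blast
    also have "\<dots> = sp (X0 \<inter> {i, j})" using span_inter_indep[OF BI X0B ijB] .
    also have "X0 \<inter> {i, j} = {j}" using X0_def ij by blast
    finally have "c \<in> sp {j}" .
    then show False using span_single[OF jP] c by blast
  qed
  define B2 where "B2 = insert c X0"
  have B2I: "indep B2" using indep_insert[OF X0I cP cX0] B2_def by simp
  have iX0: "i \<notin> sp X0" using indep_notin[OF BI ij(1)] X0_def by simp
  have "X0 \<union> {i} = B" using X0_def ij by blast
  then have "c \<in> sp (X0 \<union> {i})" using base_D(2)[OF B] cP by simp
  then have "i \<in> sp (X0 \<union> {c})" using exch[OF X0P iP iX0 cP cX0] by blast
  then have iB2: "i \<in> sp B2" using B2_def by simp
  have B2P: "B2 \<subseteq> P" using B2_def X0P cP by blast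
  have "X0 \<subseteq> sp B2" using span_sup[OF B2P] B2_def by blast
  then have "B \<subseteq> sp B2" using iB2 X0_def by blast
  then have "sp B \<subseteq> sp B2" using span_sub_span B2P by blast
  then have "sp B2 = P" using base_D(2)[OF B] span_P[OF B2P] by blast
  then have B2: "ls_base P L B2" using base_I B2I by blast
  have incl: "base_subset P L k B - Bij k B i j \<subseteq> base_subset P L k B2"
  proof
    fix U assume U: "U \<in> base_subset P L k B - Bij k B i j"
    then have Ub: "U \<in> base_subset P L k B" by blast
    define Z where "Z = B \<inter> U"
    have r: "U = sp Z" "card Z = k + 1" using bsub_repr[OF B Ub] Z_def by blast+
    have ZB: "Z \<subseteq> B" using Z_def by blast
    have ZP: "Z \<subseteq> P" using ZB BP by blast
    have fZ: "finite Z" using ZB fB finite_subset by blast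
    have nij: "\<not> (i \<in> U \<and> j \<notin> U)" using U unfolding Bij_def by blast
    show "U \<in> base_subset P L k B2"
    proof (cases "i \<in> Z")
      case False
      then have "Z \<subseteq> B2" using ZB X0_def B2_def by blast
      then show ?thesis unfolding bsub_iff[OF B2] using r by blast
    next
      case True
      then have jZ: "j \<in> Z" using nij Z_def ij by blast
      define Z2 where "Z2 = insert c (Z - {i})"
      have Z2B2: "Z2 \<subseteq> B2" using Z2_def ZB X0_def B2_def by blast
      have "c \<notin> Z - {i}" using cnB ZB by blast
      moreover have "card (Z - {i}) = k" using r(2) True fZ by (simp add: card_Diff_singleton)
      ultimately have cZ2: "card Z2 = k + 1" using Z2_def fZ by simp
      have Z2P: "Z2 \<subseteq> P" using Z2B2 B2P by blast
      have "sp {i, j} \<subseteq> sp Z" using span_mono[of "{i, j}" Z] True jZ ZP by blast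
      then have "c \<in> sp Z" using csp by blast
      then have "Z2 \<subseteq> sp Z" using Z2_def span_sup[OF ZP] by blast
      then have s1: "sp Z2 \<subseteq> sp Z" using span_sub_span ZP by blast
      have cZ2': "c \<in> sp Z2" "j \<in> sp Z2" using span_sup[OF Z2P] Z2_def jZ ij by blast+
      have "ls_line L c j = l" using line_unique[OF l(1) c(1) l(3) c(3)] .
      then have "l \<subseteq> sp Z2" using line_in_span[OF cP jP c(3) Z2P cZ2'] by simp
      then have "i \<in> sp Z2" using l by blast
      then have "Z \<subseteq> sp Z2" using Z2_def span_sup[OF Z2P] by blast
      then have "sp Z \<subseteq> sp Z2" using span_sub_span Z2P by blast
      then have "U = sp Z2" using s1 r by blast
      then show ?thesis unfolding bsub_iff[OF B2] using Z2B2 cZ2 by blast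
    qed
  qed
  have neq: "base_subset P L k B2 \<noteq> base_subset P L k B"
  proof
    assume eq: "base_subset P L k B2 = base_subset P L k B"
    have "card (B - {i, j}) = n - 1" using fB cB ij by (simp add: card_Diff_subset)
    then have "k \<le> card (B - {i, j})" using kn by simp
    then obtain Y where Y: "Y \<subseteq> B - {i, j}" "card Y = k" "finite Y"
      using obtain_subset_with_card_n by metis
    have cY: "c \<notin> Y" using Y cnB by blast
    have YB2: "insert c Y \<subseteq> B2" using Y B2_def X0_def by blast
    have "card (insert c Y) = k + 1" using Y cY by simp
    then have "sp (insert c Y) \<in> base_subset P L k B2" unfolding bsub_iff[OF B2] using YB2 by blast
    then have V: "sp (insert c Y) \<in> base_subset P L k B" using eq by simp
    define Z where "Z = B \<inter> sp (insert c Y)"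
    have rZ: "sp (insert c Y) = sp Z" using bsub_repr[OF B V] Z_def by blast
    have ZB: "Z \<subseteq> B" using Z_def by blast
    have cZ: "c \<in> sp Z" using rZ span_sup[OF B2P] YB2 span_sup[of "insert c Y"] B2P by (metis insert_subset order_trans)
    have jZ: "j \<in> Z"
    proof (rule ccontr)
      assume jn: "j \<notin> Z"
      have "c \<in> sp Z \<inter> sp {i, j}" using cZ csp by blast
      also have "\<dots> = sp (Z \<inter> {i, j})" using span_inter_indep[OF BI ZB ijB] .
      also have "\<dots> \<subseteq> sp {i}" using span_mono[of "Z \<inter> {i, j}" "{i}"] jn iP by blast
      also have "\<dots> = {i}" using span_single[OF iP] .
      finally show False using c by blast
    qed
    then have "j \<in> sp (insert c Y)" using Z_def by blast
    moreover have "j \<in> B2" using ij B2_def X0_def by blast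
    ultimately have "j \<in> insert c Y" using indep_span_inter[OF B2I YB2] by blast
    then show False using Y c by blast
  qed
  show ?thesis using B2 incl neq by blast
qed

end

lemma arith_key:
  fixes a k m :: nat
  assumes "a \<le> k" "1 \<le> k" "k * (m + k) \<le> a * (m + a)"
  shows "a = k"
proof (rule ccontr)
  assume "a \<noteq> k"
  then have ak: "a < k" using assms(1) by simp
  have "a * (m + a) \<le> a * (m + k)" using ak by (intro mult_le_mono2) simp
  also have "a * (m + k) < k * (m + k)" using ak assms(2) by (intro mult_less_mono1) auto
  finally show False using assms(3) by simp
qed

context lsp begin

definition adj :: "nat \<Rightarrow> 'p set \<Rightarrow> 'p set \<Rightarrow> bool" where
  "adj k V W \<longleftrightarrow> hdim (V \<inter> W) (k - 1) \<and> hdim (sp (V \<union> W)) (k + 1)"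

lemma adj_from_base:
  assumes B: "ls_base P L B" and Z: "Z1 \<subseteq> B" "Z2 \<subseteq> B" "card Z1 = k + 1" "card Z2 = k + 1"
    and c: "card (Z1 \<inter> Z2) = k" and k1: "1 \<le> k"
  shows "adj k (sp Z1) (sp Z2)"
proof -
  have BI: "indep B" using base_D(1)[OF B] .
  have BP: "B \<subseteq> P" using indep_sub_P[OF BI] .
  have fB: "finite B" using base_card[OF B] by blast
  have e1: "sp Z1 \<inter> sp Z2 = sp (Z1 \<inter> Z2)" using span_inter_indep[OF BI Z(1,2)] .
  have "Z1 \<inter> Z2 \<subseteq> B" using Z(1) by blast
  then have i1: "indep (Z1 \<inter> Z2)" by (rule indep_subset[OF BI])
  have "card (Z1 \<inter> Z2) = (k - 1) + 1" using c k1 by simp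
  then have h1: "hdim (sp Z1 \<inter> sp Z2) (k - 1)" using imp_hdim[OF i1] e1 by simp
  have Z1P: "Z1 \<subseteq> P" using Z(1) BP by (rule order_trans)
  have Z2P: "Z2 \<subseteq> P" using Z(2) BP by (rule order_trans)
  have e2: "sp (sp Z1 \<union> sp Z2) = sp (Z1 \<union> Z2)" using span_Un_span[OF Z1P Z2P] .
  have "Z1 \<union> Z2 \<subseteq> B" using Z(1,2) by (rule Un_least)
  then have i2: "indep (Z1 \<union> Z2)" by (rule indep_subset[OF BI])
  have f12: "finite Z1" "finite Z2" using Z fB finite_subset by blast+
  have "card (Z1 \<union> Z2) + card (Z1 \<inter> Z2) = card Z1 + card Z2" using card_Un_Int[OF f12] by simp
  then have "card (Z1 \<union> Z2) = (k + 1) + 1" using Z c by simp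
  then have h2: "hdim (sp (sp Z1 \<union> sp Z2)) (k + 1)" using imp_hdim[OF i2] e2 by simp
  show ?thesis unfolding adj_def using h1 h2 by blast
qed

lemma adj_sym: "adj k V W \<Longrightarrow> adj k W V"
  unfolding adj_def by (simp add: Int_commute Un_commute)

lemma triple:
  assumes k1: "1 \<le> k" and V: "hdim V1 k" "hdim V2 k" "hdim V3 k"
    and a: "adj k V1 V2" "adj k V1 V3" "adj k V2 V3" and n: "\<not> (V1 \<inter> V2 \<subseteq> V3)"
  shows "V3 \<subseteq> sp (V1 \<union> V2)"
proof -
  have hA: "hdim (V1 \<inter> V2) (k - 1)" using a(1) unfolding adj_def by blast
  have h1: "hdim (V1 \<inter> V3) (k - 1)" using a(2) unfolding adj_def by blast
  have h2: "hdim (V2 \<inter> V3) (k - 1)" using a(3) unfolding adj_def by blast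
  have ne: "V1 \<inter> V3 \<noteq> V2 \<inter> V3"
  proof
    assume e: "V1 \<inter> V3 = V2 \<inter> V3"
    then have "V1 \<inter> V3 \<subseteq> V1 \<inter> V2" by blast
    then have "V1 \<inter> V3 = V1 \<inter> V2" using dim_eq_sub[OF h1 hA] by blast
    then show False using n by blast
  qed
  have V3P: "V3 \<subseteq> P" using hdim_P[OF V(3)] .
  have V1P: "V1 \<subseteq> P" using hdim_P[OF V(1)] .
  have V2P: "V2 \<subseteq> P" using hdim_P[OF V(2)] .
  define M where "M = sp ((V1 \<inter> V3) \<union> (V2 \<inter> V3))"
  have MP: "(V1 \<inter> V3) \<union> (V2 \<inter> V3) \<subseteq> P" using V3P by blast
  have Ms: "subsp M" using span_subsp[OF MP] M_def by simp
  have M1: "V1 \<inter> V3 \<subseteq> M" using span_sup[OF MP] M_def by blast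
  have M3: "M \<subseteq> V3" unfolding M_def by (rule span_least[OF hdim_subsp[OF V(3)]]) blast
  have Mne: "V1 \<inter> V3 \<noteq> M"
  proof
    assume e: "V1 \<inter> V3 = M"
    have "V2 \<inter> V3 \<subseteq> M" using span_sup[OF MP] M_def by blast
    then have "V2 \<inter> V3 \<subseteq> V1 \<inter> V3" using e by simp
    then have "V2 \<inter> V3 = V1 \<inter> V3" using dim_eq_sub[OF h2 h1] by blast
    then show False using ne by simp
  qed
  have hk: "hdim V3 (Suc (k - 1))" using V(3) k1 by simp
  have "M = V3" using squeeze[OF h1 hk Ms M1 M3 Mne] .
  moreover have "M \<subseteq> sp (V1 \<union> V2)" unfolding M_def
    using span_mono[of "(V1 \<inter> V3) \<union> (V2 \<inter> V3)" "V1 \<union> V2"] V1P V2P by blast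
  ultimately show ?thesis by simp
qed

lemma clique:
  assumes k1: "1 \<le> k" and VV: "\<forall>V\<in>\<V>. hdim V k"
    and pw: "\<forall>V\<in>\<V>. \<forall>W\<in>\<V>. V \<noteq> W \<longrightarrow> adj k V W"
    and V12: "V1 \<in> \<V>" "V2 \<in> \<V>" "V1 \<noteq> V2"
  shows "(\<forall>V\<in>\<V>. V1 \<inter> V2 \<subseteq> V) \<or> (\<forall>V\<in>\<V>. V \<subseteq> sp (V1 \<union> V2))"
proof (rule ccontr)
  assume "\<not> ?thesis"
  then obtain V3 V4 where V3: "V3 \<in> \<V>" "\<not> (V1 \<inter> V2 \<subseteq> V3)" and V4: "V4 \<in> \<V>" "\<not> (V4 \<subseteq> sp (V1 \<union> V2))"
    by blast
  define J where "J = sp (V1 \<union> V2)"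
  have h1: "hdim V1 k" and h2: "hdim V2 k" and h3: "hdim V3 k" and h4: "hdim V4 k"
    using VV V12 V3 V4 by blast+
  have V1P: "V1 \<subseteq> P" using hdim_P[OF h1] .
  have V2P: "V2 \<subseteq> P" using hdim_P[OF h2] .
  have V12P: "V1 \<union> V2 \<subseteq> P" using V1P V2P by blast
  have V1J: "V1 \<subseteq> J" and V2J: "V2 \<subseteq> J" using span_sup[OF V12P] J_def by blast+
  have d13: "V1 \<noteq> V3" using V3 by blast
  have d23: "V2 \<noteq> V3" using V3 by blast
  have a12: "adj k V1 V2" using pw V12 by blast
  have a13: "adj k V1 V3" using pw V12 V3 d13 by blast
  have a23: "adj k V2 V3" using pw V12 V3 d23 by blast
  have V3J: "V3 \<subseteq> J" using triple[OF k1 h1 h2 h3 a12 a13 a23 V3(2)] J_def by simp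
  have d14: "V1 \<noteq> V4" using V4 V1J J_def by blast
  have d34: "V3 \<noteq> V4" using V4 V3J J_def by blast
  have AV4: "V1 \<inter> V2 \<subseteq> V4"
  proof (rule ccontr)
    assume nn: "\<not> (V1 \<inter> V2 \<subseteq> V4)"
    have d24: "V2 \<noteq> V4" using V4 V2J J_def by blast
    have a14: "adj k V1 V4" using pw V12 V4 d14 by blast
    have a24: "adj k V2 V4" using pw V12 V4 d24 by blast
    have "V4 \<subseteq> J" using triple[OF k1 h1 h2 h4 a12 a14 a24 nn] J_def by simp
    then show False using V4 J_def by blast
  qed
  have a14: "adj k V1 V4" using pw V12 V4 d14 by blast
  have a34: "adj k V3 V4" using pw V3 V4 d34 by blast
  have B13: "V1 \<inter> V3 \<subseteq> V4"
  proof (rule ccontr)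
    assume nn: "\<not> (V1 \<inter> V3 \<subseteq> V4)"
    have "V4 \<subseteq> sp (V1 \<union> V3)" using triple[OF k1 h1 h3 h4 a13 a14 a34 nn] .
    moreover have "sp (V1 \<union> V3) \<subseteq> J"
      unfolding J_def by (rule span_sub_span) (use V1J V3J J_def V12P in auto)
    ultimately show False using V4 J_def by blast
  qed
  have h14: "hdim (V1 \<inter> V4) (k - 1)" using a14 unfolding adj_def by blast
  have hA: "hdim (V1 \<inter> V2) (k - 1)" using a12 unfolding adj_def by blast
  have h13: "hdim (V1 \<inter> V3) (k - 1)" using a13 unfolding adj_def by blast
  have "V1 \<inter> V2 = V1 \<inter> V4" using dim_eq_sub[OF hA h14] AV4 by blast
  moreover have "V1 \<inter> V3 = V1 \<inter> V4" using dim_eq_sub[OF h13 h14] B13 by blast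
  ultimately have "V1 \<inter> V2 = V1 \<inter> V3" by simp
  then show False using V3 by blast
qed

end

locale setting = S1: lsp P L n + S2: lsp P' L' n
  for P :: "'p set" and L :: "'p set set" and P' :: "'q set" and L' :: "'q set set" and n :: nat +
  fixes k :: nat and f :: "'p set \<Rightarrow> 'q set"
  assumes k1: "1 \<le> k" and kn: "2 * k + 1 \<le> n" and P2: "axiom_P2 L"
    and finj: "inj_on f (Grass P L k)" and fG: "f ` Grass P L k \<subseteq> Grass P' L' k"
    and fB: "\<forall>\<B>. is_base_subset P L k \<B> \<longrightarrow> is_base_subset P' L' k (f ` \<B>)"
begin

lemma base_img:
  assumes B: "ls_base P L B"
  shows "\<exists>B'. ls_base P' L' B' \<and> f ` base_subset P L k B = base_subset P' L' k B'"
proof -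
  have "is_base_subset P L k (base_subset P L k B)" unfolding is_base_subset_def using B by blast
  then have "is_base_subset P' L' k (f ` base_subset P L k B)" using fB by blast
  then show ?thesis unfolding is_base_subset_def by blast
qed

lemma Bij_img:
  assumes B: "ls_base P L B" and B': "ls_base P' L' B'"
    and e: "f ` base_subset P L k B = base_subset P' L' k B'"
    and ij: "i \<in> B" "j \<in> B" "i \<noteq> j"
  shows "\<exists>i' j'. i' \<in> B' \<and> j' \<in> B' \<and> i' \<noteq> j' \<and> f ` S1.Bij k B i j = S2.Bij k B' i' j'"
proof -
  have kn1: "k + 1 \<le> n" using kn by simp
  obtain B2 where B2: "ls_base P L B2" and incl: "base_subset P L k B - S1.Bij k B i j \<subseteq> base_subset P L k B2"
    and neq: "base_subset P L k B2 \<noteq> base_subset P L k B"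
    using S1.inexact[OF B P2 ij kn1] by blast
  obtain B3 where B3: "ls_base P' L' B3" and e3: "f ` base_subset P L k B2 = base_subset P' L' k B3"
    using base_img[OF B2] by blast
  define X where "X = f ` (base_subset P L k B - S1.Bij k B i j)"
  have X1: "X \<subseteq> base_subset P' L' k B'" unfolding X_def using e by blast
  have X3: "X \<subseteq> base_subset P' L' k B3" unfolding X_def using e3 incl by blast
  have neq': "base_subset P' L' k B3 \<noteq> base_subset P' L' k B'"
  proof
    assume "base_subset P' L' k B3 = base_subset P' L' k B'"
    then have "f ` base_subset P L k B2 = f ` base_subset P L k B" using e e3 by simp
    then show False using neq inj_on_image_eq_iff[OF finj S1.bsub_Grass[of k B2] S1.bsub_Grass[of k B]] by simp
  qed
  have n1: "1 \<le> n" using kn by simp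
  have "\<not> (\<forall>i'\<in>B'. \<forall>j'\<in>B'. i' \<noteq> j' \<longrightarrow> X \<inter> S2.Bij k B' i' j' \<noteq> {})"
  proof
    assume "\<forall>i'\<in>B'. \<forall>j'\<in>B'. i' \<noteq> j' \<longrightarrow> X \<inter> S2.Bij k B' i' j' \<noteq> {}"
    then have "base_subset P' L' k B3 = base_subset P' L' k B'" using S2.exact[OF B' B3 n1 X1 X3] by blast
    then show False using neq' by simp
  qed
  then obtain i' j' where ij': "i' \<in> B'" "j' \<in> B'" "i' \<noteq> j'" and dis: "X \<inter> S2.Bij k B' i' j' = {}"
    by blast
  have sub: "S2.Bij k B' i' j' \<subseteq> f ` S1.Bij k B i j"
  proof
    fix x assume x: "x \<in> S2.Bij k B' i' j'"
    then have "x \<in> f ` base_subset P L k B" using S2.Bij_sub e by blast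
    then obtain u where u: "u \<in> base_subset P L k B" "x = f u" by blast
    show "x \<in> f ` S1.Bij k B i j"
    proof (cases "u \<in> S1.Bij k B i j")
      case True
      then show ?thesis using u by blast
    next
      case False
      then have "x \<in> X" using u X_def by blast
      then show ?thesis using x dis by blast
    qed
  qed
  have BijG: "S1.Bij k B i j \<subseteq> Grass P L k" by (rule order_trans[OF S1.Bij_sub S1.bsub_Grass])
  have injB: "inj_on f (S1.Bij k B i j)" using inj_on_subset[OF finj BijG] .
  have finB: "finite (S1.Bij k B i j)" by (rule finite_subset[OF S1.Bij_sub S1.bsub_finite[OF B]])
  have "card (f ` S1.Bij k B i j) = card (S1.Bij k B i j)" using card_image[OF injB] .
  also have "\<dots> = (n - 1) choose k" using S1.card_Bij[OF B ij] .
  also have "\<dots> = card (S2.Bij k B' i' j')" using S2.card_Bij[OF B' ij'] by simp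
  finally have c: "card (S2.Bij k B' i' j') = card (f ` S1.Bij k B i j)" by simp
  have "S2.Bij k B' i' j' = f ` S1.Bij k B i j"
    using card_subset_eq[OF finite_imageI[OF finB] sub c] .
  then show ?thesis using ij' by blast
qed

lemma adj_pres:
  assumes B: "ls_base P L B" and B': "ls_base P' L' B'"
    and e: "f ` base_subset P L k B = base_subset P' L' k B'"
    and Z: "Z1 \<subseteq> B" "Z2 \<subseteq> B" "card Z1 = k + 1" "card Z2 = k + 1" and c: "card (Z1 \<inter> Z2) = k"
  shows "card ((B' \<inter> f (ls_span P L Z1)) \<inter> (B' \<inter> f (ls_span P L Z2))) = k"
proof -
  define U1 where "U1 = ls_span P L Z1"
  define U2 where "U2 = ls_span P L Z2"
  define Z1' where "Z1' = B' \<inter> f U1"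
  define Z2' where "Z2' = B' \<inter> f U2"
  have BI: "ls_independent P L B" using S1.base_D(1)[OF B] .
  have fB1: "finite B" and cB: "card B = n + 1" using S1.base_card[OF B] by blast+
  have fB': "finite B'" and cB': "card B' = n + 1" using S2.base_card[OF B'] by blast+
  have U1b: "U1 \<in> base_subset P L k B" unfolding U1_def S1.bsub_iff[OF B] using Z by blast
  have U2b: "U2 \<in> base_subset P L k B" unfolding U2_def S1.bsub_iff[OF B] using Z by blast
  have fU1: "f U1 \<in> base_subset P' L' k B'" using U1b e by blast
  have fU2: "f U2 \<in> base_subset P' L' k B'" using U2b e by blast
  have r1: "f U1 = ls_span P' L' Z1'" "card Z1' = k + 1" using S2.bsub_repr[OF B' fU1] Z1'_def by blast+
  have r2: "f U2 = ls_span P' L' Z2'" "card Z2' = k + 1" using S2.bsub_repr[OF B' fU2] Z2'_def by blast+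
  have Z1'B: "Z1' \<subseteq> B'" and Z2'B: "Z2' \<subseteq> B'" using Z1'_def Z2'_def by blast+
  have fZ1': "finite Z1'" and fZ2': "finite Z2'" using Z1'B Z2'B fB' finite_subset by blast+
  have dZ: "Z1' \<noteq> Z2'"
  proof
    assume "Z1' = Z2'"
    then have "f U1 = f U2" using r1 r2 by simp
    then have "U1 = U2" using inj_onD[OF finj] U1b U2b S1.bsub_Grass by blast
    have "Z1 = B \<inter> U1" using S1.indep_span_inter[OF BI Z(1)] U1_def by simp
    also have "\<dots> = B \<inter> U2" using \<open>U1 = U2\<close> by simp
    also have "\<dots> = Z2" using S1.indep_span_inter[OF BI Z(2)] U2_def by simp
    finally have "Z1 = Z2" .
    then show False using c Z by simp
  qed
  define a where "a = card (Z1' \<inter> Z2')"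
  have "a \<le> card Z1'" unfolding a_def by (rule card_mono[OF fZ1']) blast
  moreover have "a \<noteq> k + 1"
  proof
    assume "a = k + 1"
    then have "Z1' \<inter> Z2' = Z1'" using card_subset_eq[OF fZ1', of "Z1' \<inter> Z2'"] r1 a_def by simp
    moreover have "Z1' \<inter> Z2' = Z2'" using card_subset_eq[OF fZ2', of "Z1' \<inter> Z2'"] r2 a_def \<open>a = k + 1\<close> by simp
    ultimately show False using dZ by simp
  qed
  ultimately have ak: "a \<le> k" using r1 by simp
  define S where "S = (Z1 \<inter> Z2) \<times> (B - (Z1 \<union> Z2))"
  define S' where "S' = (Z1' \<inter> Z2') \<times> (B' - (Z1' \<union> Z2'))"
  define \<sigma> where "\<sigma> = (\<lambda>(i, j). SOME p. fst p \<in> B' \<and> snd p \<in> B' \<and> fst p \<noteq> snd p \<and>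
      f ` S1.Bij k B i j = S2.Bij k B' (fst p) (snd p))"
  have sig: "fst (\<sigma> (i, j)) \<in> B' \<and> snd (\<sigma> (i, j)) \<in> B' \<and> fst (\<sigma> (i, j)) \<noteq> snd (\<sigma> (i, j)) \<and>
      f ` S1.Bij k B i j = S2.Bij k B' (fst (\<sigma> (i, j))) (snd (\<sigma> (i, j)))"
    if ij: "i \<in> B" "j \<in> B" "i \<noteq> j" for i j
  proof -
    obtain i' j' where "i' \<in> B' \<and> j' \<in> B' \<and> i' \<noteq> j' \<and> f ` S1.Bij k B i j = S2.Bij k B' i' j'"
      using Bij_img[OF B B' e ij] by blast
    define Q where "Q = (\<lambda>p. fst p \<in> B' \<and> snd p \<in> B' \<and> fst p \<noteq> snd p \<and>
      f ` S1.Bij k B i j = S2.Bij k B' (fst p) (snd p))"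
    have ex: "\<exists>p. Q p" unfolding Q_def using \<open>i' \<in> B' \<and> j' \<in> B' \<and> i' \<noteq> j' \<and> f ` S1.Bij k B i j = S2.Bij k B' i' j'\<close>
      by (intro exI[of _ "(i', j')"]) simp
    have "Q (SOME p. Q p)" by (rule someI_ex[OF ex])
    moreover have "\<sigma> (i, j) = (SOME p. Q p)" unfolding \<sigma>_def Q_def by simp
    ultimately show ?thesis unfolding Q_def by simp
  qed
  have maps: "\<sigma> ` S \<subseteq> S'"
  proof
    fix q assume "q \<in> \<sigma> ` S"
    then obtain i j where ij: "(i, j) \<in> S" "q = \<sigma> (i, j)" by auto
    have iZ: "i \<in> Z1" "i \<in> Z2" and jB: "j \<in> B" "j \<notin> Z1" "j \<notin> Z2" using ij S_def by blast+
    have iB: "i \<in> B" using iZ Z by blast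
    have ijn: "i \<noteq> j" using iZ jB by blast
    have s: "fst q \<in> B' \<and> snd q \<in> B' \<and> fst q \<noteq> snd q \<and> f ` S1.Bij k B i j = S2.Bij k B' (fst q) (snd q)"
      using sig[OF iB jB(1) ijn] ij by simp
    have "U1 \<in> S1.Bij k B i j" unfolding U1_def using S1.mem_Bij[OF B Z(1) Z(3) iZ(1) jB(1,2)] .
    then have "f U1 \<in> S2.Bij k B' (fst q) (snd q)" using s by blast
    then have "ls_span P' L' Z1' \<in> S2.Bij k B' (fst q) (snd q)" using r1 by simp
    then have q1: "fst q \<in> Z1' \<and> snd q \<notin> Z1'" using S2.Bij_D[OF B' Z1'B] s by blast
    have "U2 \<in> S1.Bij k B i j" unfolding U2_def using S1.mem_Bij[OF B Z(2) Z(4) iZ(2) jB(1,3)] .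
    then have "f U2 \<in> S2.Bij k B' (fst q) (snd q)" using s by blast
    then have "ls_span P' L' Z2' \<in> S2.Bij k B' (fst q) (snd q)" using r2 by simp
    then have q2: "fst q \<in> Z2' \<and> snd q \<notin> Z2'" using S2.Bij_D[OF B' Z2'B] s by blast
    show "q \<in> S'" unfolding S'_def using q1 q2 s by (cases q) auto
  qed
  have inj: "inj_on \<sigma> S"
  proof
    fix x y assume xy: "x \<in> S" "y \<in> S" "\<sigma> x = \<sigma> y"
    obtain i j where x: "x = (i, j)" by (cases x)
    obtain i2 j2 where y: "y = (i2, j2)" by (cases y)
    have ijB: "i \<in> B" "j \<in> B" "i \<noteq> j" using xy(1) x S_def Z by blast+
    have ijB2: "i2 \<in> B" "j2 \<in> B" "i2 \<noteq> j2" using xy(2) y S_def Z by blast+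
    have "f ` S1.Bij k B i j = f ` S1.Bij k B i2 j2"
      using sig[OF ijB] sig[OF ijB2] xy(3) x y by simp
    moreover have "S1.Bij k B i j \<subseteq> Grass P L k" by (rule order_trans[OF S1.Bij_sub S1.bsub_Grass])
    moreover have "S1.Bij k B i2 j2 \<subseteq> Grass P L k" by (rule order_trans[OF S1.Bij_sub S1.bsub_Grass])
    ultimately have "S1.Bij k B i j = S1.Bij k B i2 j2" using inj_on_image_eq_iff[OF finj \<open>S1.Bij k B i j \<subseteq> Grass P L k\<close> \<open>S1.Bij k B i2 j2 \<subseteq> Grass P L k\<close>] by simp
    moreover have "k + 2 \<le> n" using kn k1 by simp
    ultimately have "i = i2 \<and> j = j2" using S1.Bij_inj[OF B ijB ijB2] k1 by blast
    then show "x = y" using x y by simp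
  qed
  have finS': "finite S'" unfolding S'_def using fB' fZ1' by simp
  have cle: "card S \<le> card S'" using card_inj_on_le[OF inj maps finS'] .
  have fZ1: "finite Z1" and fZ2: "finite Z2" using Z fB1 finite_subset by blast+
  have "card (Z1 \<union> Z2) + card (Z1 \<inter> Z2) = card Z1 + card Z2" using card_Un_Int[OF fZ1 fZ2] by simp
  then have cu: "card (Z1 \<union> Z2) = k + 2" using Z c by simp
  have "card (B - (Z1 \<union> Z2)) = card B - card (Z1 \<union> Z2)"
    using Z fB1 by (intro card_Diff_subset) (auto intro: finite_subset)
  then have cd: "card (B - (Z1 \<union> Z2)) = n + 1 - (k + 2)" using cu cB by simp
  have cS: "card S = k * (n + 1 - (k + 2))" unfolding S_def using c cd by (simp add: card_cartesian_product)
  have "card (Z1' \<union> Z2') + card (Z1' \<inter> Z2') = card Z1' + card Z2'" using card_Un_Int[OF fZ1' fZ2'] by simp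
  then have cu': "card (Z1' \<union> Z2') = 2 * k + 2 - a" using r1 r2 a_def by simp
  have "card (B' - (Z1' \<union> Z2')) = card B' - card (Z1' \<union> Z2')"
    using Z1'B Z2'B fB' by (intro card_Diff_subset) (auto intro: finite_subset)
  then have cd': "card (B' - (Z1' \<union> Z2')) = n + 1 - (2 * k + 2 - a)" using cu' cB' by simp
  have cS': "card S' = a * (n + 1 - (2 * k + 2 - a))" unfolding S'_def using cd' a_def by (simp add: card_cartesian_product)
  define m where "m = n - (2 * k + 1)"
  have e1: "n + 1 - (k + 2) = m + k" using kn m_def by simp
  have e2: "n + 1 - (2 * k + 2 - a) = m + a" using kn m_def ak by simp
  have cS2: "card S' = a * (m + a)" using cS' e2 by (simp only:)
  have cS1: "card S = k * (m + k)" using cS e1 by (simp only:)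
  have "k * (m + k) \<le> a * (m + a)" using cle cS1 cS2 by simp
  then have "a = k" using arith_key[OF ak k1] by blast
  then show ?thesis using a_def Z1'_def Z2'_def U1_def U2_def by simp
qed

lemma adj_img:
  assumes B: "ls_base P L B" and Z: "Z1 \<subseteq> B" "Z2 \<subseteq> B" "card Z1 = k + 1" "card Z2 = k + 1"
    and c: "card (Z1 \<inter> Z2) = k"
  shows "S2.adj k (f (ls_span P L Z1)) (f (ls_span P L Z2))"
proof -
  obtain B' where B': "ls_base P' L' B'" and e: "f ` base_subset P L k B = base_subset P' L' k B'"
    using base_img[OF B] by blast
  define Z1' where "Z1' = B' \<inter> f (ls_span P L Z1)"
  define Z2' where "Z2' = B' \<inter> f (ls_span P L Z2)"
  have U1b: "ls_span P L Z1 \<in> base_subset P L k B" unfolding S1.bsub_iff[OF B] using Z by blast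
  have U2b: "ls_span P L Z2 \<in> base_subset P L k B" unfolding S1.bsub_iff[OF B] using Z by blast
  have fU1: "f (ls_span P L Z1) \<in> base_subset P' L' k B'" using U1b e by blast
  have fU2: "f (ls_span P L Z2) \<in> base_subset P' L' k B'" using U2b e by blast
  have r1: "f (ls_span P L Z1) = ls_span P' L' Z1'" "card Z1' = k + 1" using S2.bsub_repr[OF B' fU1] Z1'_def by blast+
  have r2: "f (ls_span P L Z2) = ls_span P' L' Z2'" "card Z2' = k + 1" using S2.bsub_repr[OF B' fU2] Z2'_def by blast+
  have c': "card (Z1' \<inter> Z2') = k" using adj_pres[OF B B' e Z c] Z1'_def Z2'_def by simp
  have "S2.adj k (ls_span P' L' Z1') (ls_span P' L' Z2')"
    by (rule S2.adj_from_base[OF B']) (use Z1'_def Z2'_def r1 r2 c' k1 in auto)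
  then show ?thesis using r1 r2 by simp
qed

end

context lsp begin

lemma star_rep:
  assumes S: "hdim S m" and Y: "indep Y" "card Y = m + 1" "sp Y = S"
    and U: "hdim U (Suc m)" "S \<subseteq> U"
  shows "\<exists>a. a \<in> U \<and> a \<notin> S \<and> U = sp (insert a Y) \<and> indep (insert a Y) \<and> card (insert a Y) = Suc m + 1"
proof -
  have "U \<noteq> S"
  proof
    assume "U = S"
    then have "Suc m = m" using hdim_unique[OF U(1)] S by simp
    then show False by simp
  qed
  then obtain a where a: "a \<in> U" "a \<notin> S" using U(2) by blast
  have UP: "U \<subseteq> P" using hdim_P[OF U(1)] .
  have aP: "a \<in> P" using a UP by blast
  have ind: "indep (insert a Y)" using indep_insert[OF Y(1) aP] a Y(3) by simp
  have YP: "Y \<subseteq> P" using indep_sub_P[OF Y(1)] .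
  have YS: "Y \<subseteq> S" using span_sup[OF YP] Y(3) by simp
  then have "a \<notin> Y" using a by blast
  then have c: "card (insert a Y) = Suc m + 1" using Y indep_finite[OF Y(1)] by simp
  have h: "hdim (sp (insert a Y)) (Suc m)" using imp_hdim[OF ind c] .
  have "insert a Y \<subseteq> U" using a YS U(2) by blast
  then have "sp (insert a Y) \<subseteq> U" using span_least[OF hdim_subsp[OF U(1)]] by blast
  then have "sp (insert a Y) = U" using dim_eq_sub[OF h U(1)] by blast
  then show ?thesis using a ind c by blast
qed

lemma exists_outside:
  assumes S: "hdim S m" and m: "m < n"
  shows "\<exists>a \<in> P. a \<notin> S"
proof (rule ccontr)
  assume "\<not> (\<exists>a \<in> P. a \<notin> S)"
  then have "P \<subseteq> S" by blast
  then have "S = P" using hdim_P[OF S] by blast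
  then have "m = n" using hdim_unique[OF S] dimP by simp
  then show False using m by simp
qed

lemma Grass_inc_low:
  assumes S: "hdim S (k - 1)" and k1: "1 \<le> k"
  shows "U \<in> Grass_inc P L k S \<longleftrightarrow> hdim U k \<and> S \<subseteq> U"
proof -
  have "\<not> (hdim U k \<and> U \<subseteq> S)"
  proof
    assume a: "hdim U k \<and> U \<subseteq> S"
    then have "k \<le> k - 1" using dim_mono[OF _ S] by blast
    then show False using k1 by simp
  qed
  then show ?thesis unfolding Grass_inc_def Grass_def by blast
qed

lemma Grass_inc_high:
  assumes S: "hdim S (k + 1)"
  shows "U \<in> Grass_inc P L k S \<longleftrightarrow> hdim U k \<and> U \<subseteq> S"
proof -
  have "\<not> (hdim U k \<and> S \<subseteq> U)"
  proof
    assume a: "hdim U k \<and> S \<subseteq> U"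
    then have "k + 1 \<le> k" using dim_mono[OF S] by blast
    then show False by simp
  qed
  then show ?thesis unfolding Grass_inc_def Grass_def by blast
qed

end

context setting begin

lemma star_adj:
  assumes S: "ls_has_dim P L S (k - 1)" and U: "ls_has_dim P L U k" "S \<subseteq> U" and W: "ls_has_dim P L W k" "S \<subseteq> W" and UW: "U \<noteq> W"
  shows "S2.adj k (f U) (f W)"
proof -
  have kk: "Suc (k - 1) = k" "k - 1 + 1 = k" using k1 by simp_all
  obtain Y where Y: "ls_independent P L Y" "card Y = k - 1 + 1" "ls_span P L Y = S" using S1.hdim_imp[OF S] by blast
  have U': "ls_has_dim P L U (Suc (k - 1))" using U kk by simp
  have W': "ls_has_dim P L W (Suc (k - 1))" using W kk by simp
  obtain a where a: "a \<in> U" "a \<notin> S" "U = ls_span P L (insert a Y)" "ls_independent P L (insert a Y)" "card (insert a Y) = Suc (k - 1) + 1"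
    using S1.star_rep[OF S Y U'(1) U(2)] by blast
  obtain b where b: "b \<in> W" "b \<notin> S" "W = ls_span P L (insert b Y)" "ls_independent P L (insert b Y)" "card (insert b Y) = Suc (k - 1) + 1"
    using S1.star_rep[OF S Y W'(1) W(2)] by blast
  have YP: "Y \<subseteq> P" using S1.indep_sub_P[OF Y(1)] .
  have YS: "Y \<subseteq> S" using S1.span_sup[OF YP] Y(3) by simp
  have bU: "b \<notin> U"
  proof
    assume "b \<in> U"
    then have "insert b Y \<subseteq> U" using YS U(2) by blast
    then have "W \<subseteq> U" using S1.span_least[OF S1.hdim_subsp[OF U(1)]] b(3) by blast
    then have "W = U" using S1.dim_eq_sub[OF W(1) U(1)] by blast
    then show False using UW by simp
  qed
  have bP: "b \<in> P" using b S1.hdim_P[OF W(1)] by blast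
  have indZ: "ls_independent P L (insert b (insert a Y))" using S1.indep_insert[OF a(4) bP] bU a(3) by simp
  have ZP: "insert b (insert a Y) \<subseteq> P" using S1.indep_sub_P[OF indZ] .
  obtain J where J: "ls_independent P L J" "insert b (insert a Y) \<subseteq> J" "J \<subseteq> P" "ls_span P L J = P"
    using S1.extend[OF indZ ZP S1.subsp_P] by blast
  have JB: "ls_base P L J" using S1.base_I J by blast
  have ab: "a \<noteq> b" using a bU by blast
  have aY: "a \<notin> Y" and bY: "b \<notin> Y" using a b YS by blast+
  have int: "insert a Y \<inter> insert b Y = Y" using ab aY bY by blast
  have Z1: "insert a Y \<subseteq> J" and Z2: "insert b Y \<subseteq> J" using J by blast+
  have c1: "card (insert a Y) = k + 1" and c2: "card (insert b Y) = k + 1" using a b kk by simp_all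
  have c: "card (insert a Y \<inter> insert b Y) = k" using int Y kk by simp
  have "S2.adj k (f (ls_span P L (insert a Y))) (f (ls_span P L (insert b Y)))"
    using adj_img[OF JB Z1 Z2 c1 c2 c] .
  then show ?thesis using a b by simp
qed

end

context setting begin

lemma no_pencil:
  assumes S: "ls_has_dim P L S (k - 1)" and A: "ls_has_dim P' L' A (k - 1)" and J: "ls_has_dim P' L' J (k + 1)"
    and all: "\<forall>U. ls_has_dim P L U k \<and> S \<subseteq> U \<longrightarrow> A \<subseteq> f U \<and> f U \<subseteq> J"
  shows False
proof -
  have kk: "Suc (k - 1) = k" "k - 1 + 1 = k" using k1 by simp_all
  obtain Y where Y: "ls_independent P L Y" "card Y = k - 1 + 1" "ls_span P L Y = S" using S1.hdim_imp[OF S] by blast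
  have YP: "Y \<subseteq> P" using S1.indep_sub_P[OF Y(1)] .
  have YS: "Y \<subseteq> S" using S1.span_sup[OF YP] Y(3) by simp
  have fY: "finite Y" using S1.indep_finite[OF Y(1)] .
  have cY: "card Y = k" using Y kk by simp
  have lt0: "k - 1 < n" "k < n" "k + 1 < n" using kn k1 by simp_all
  obtain a1 where a1: "a1 \<in> P" "a1 \<notin> S" using S1.exists_outside[OF S lt0(1)] by blast
  define Z1 where "Z1 = insert a1 Y"
  have i1: "ls_independent P L Z1" using S1.indep_insert[OF Y(1) a1(1)] a1 Y(3) Z1_def by simp
  have a1Y: "a1 \<notin> Y" using a1 YS by blast
  have cZ1: "card Z1 = k + 1" using Z1_def a1Y fY cY by simp
  have h1: "ls_has_dim P L (ls_span P L Z1) k" using S1.imp_hdim[OF i1 cZ1] .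
  obtain a2 where a2: "a2 \<in> P" "a2 \<notin> ls_span P L Z1" using S1.exists_outside[OF h1 lt0(2)] by blast
  define Z12 where "Z12 = insert a2 Z1"
  have i12: "ls_independent P L Z12" using S1.indep_insert[OF i1 a2(1,2)] Z12_def by simp
  have Z1P: "Z1 \<subseteq> P" using S1.indep_sub_P[OF i1] .
  have Z1sp: "Z1 \<subseteq> ls_span P L Z1" using S1.span_sup[OF Z1P] .
  have a2Z1: "a2 \<notin> Z1" using a2 Z1sp by blast
  have fZ1: "finite Z1" using Z1_def fY by simp
  have cZ12: "card Z12 = k + 2" using Z12_def a2Z1 fZ1 cZ1 by simp
  have h12: "ls_has_dim P L (ls_span P L Z12) (k + 1)" using S1.imp_hdim[OF i12] cZ12 by simp
  obtain a3 where a3: "a3 \<in> P" "a3 \<notin> ls_span P L Z12" using S1.exists_outside[OF h12 lt0(3)] by blast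
  define Z123 where "Z123 = insert a3 Z12"
  have i123: "ls_independent P L Z123" using S1.indep_insert[OF i12 a3(1,2)] Z123_def by simp
  have Z12P: "Z12 \<subseteq> P" using S1.indep_sub_P[OF i12] .
  have Z12sp: "Z12 \<subseteq> ls_span P L Z12" using S1.span_sup[OF Z12P] .
  have a3Z12: "a3 \<notin> Z12" using a3 Z12sp by blast
  have Z123P: "Z123 \<subseteq> P" using S1.indep_sub_P[OF i123] .
  obtain B where B0: "ls_independent P L B" "Z123 \<subseteq> B" "B \<subseteq> P" "ls_span P L B = P"
    using S1.extend[OF i123 Z123P S1.subsp_P] by blast
  have B: "ls_base P L B" using S1.base_I B0 by blast
  define Z2 where "Z2 = insert a2 Y"
  define Z3 where "Z3 = insert a3 Y"
  have a2Y: "a2 \<notin> Y" using a2Z1 Z1_def by blast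
  have a3Y: "a3 \<notin> Y" using a3Z12 Z12_def Z1_def by blast
  have a12: "a1 \<noteq> a2" using a2Z1 Z1_def by blast
  have a13: "a1 \<noteq> a3" using a3Z12 Z12_def Z1_def by blast
  have a23: "a2 \<noteq> a3" using a3Z12 Z12_def by blast
  have Z1B: "Z1 \<subseteq> B" using B0 Z123_def Z12_def by blast
  have Z2B: "Z2 \<subseteq> B" using B0 Z123_def Z12_def Z1_def Z2_def by blast
  have Z3B: "Z3 \<subseteq> B" using B0 Z123_def Z12_def Z1_def Z3_def by blast
  have cZ2: "card Z2 = k + 1" using Z2_def a2Y fY cY by simp
  have cZ3: "card Z3 = k + 1" using Z3_def a3Y fY cY by simp
  have I12: "Z1 \<inter> Z2 = Y" using Z1_def Z2_def a12 a1Y a2Y by blast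
  have I13: "Z1 \<inter> Z3 = Y" using Z1_def Z3_def a13 a1Y a3Y by blast
  have c12: "card (Z1 \<inter> Z2) = k" using I12 cY by simp
  have c13: "card (Z1 \<inter> Z3) = k" using I13 cY by simp
  have BI: "ls_independent P L B" using B0(1) .
  have BP: "B \<subseteq> P" using B0(3) .
  define U1 where "U1 = ls_span P L Z1"
  define U2 where "U2 = ls_span P L Z2"
  define U3 where "U3 = ls_span P L Z3"
  have U1b: "U1 \<in> base_subset P L k B" unfolding U1_def S1.bsub_iff[OF B] using Z1B cZ1 by blast
  have U2b: "U2 \<in> base_subset P L k B" unfolding U2_def S1.bsub_iff[OF B] using Z2B cZ2 by blast
  have U3b: "U3 \<in> base_subset P L k B" unfolding U3_def S1.bsub_iff[OF B] using Z3B cZ3 by blast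
  have U2h: "ls_has_dim P L U2 k" using U2b unfolding base_subset_def Grass_def by blast
  have U1h: "ls_has_dim P L U1 k" using U1b unfolding base_subset_def Grass_def by blast
  have U3h: "ls_has_dim P L U3 k" using U3b unfolding base_subset_def Grass_def by blast
  have SU: "S \<subseteq> U1" "S \<subseteq> U2" "S \<subseteq> U3"
  proof -
    have "Y \<subseteq> Z1" "Y \<subseteq> Z2" "Y \<subseteq> Z3" using Z1_def Z2_def Z3_def by blast+
    moreover have "Z1 \<subseteq> P" "Z2 \<subseteq> P" "Z3 \<subseteq> P" using Z1B Z2B Z3B BP by blast+
    ultimately show "S \<subseteq> U1" "S \<subseteq> U2" "S \<subseteq> U3"
      using S1.span_mono Y(3) U1_def U2_def U3_def by blast+
  qed
  have all1: "A \<subseteq> f U1 \<and> f U1 \<subseteq> J" using all U1h SU by blast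
  have all2: "A \<subseteq> f U2 \<and> f U2 \<subseteq> J" using all U2h SU by blast
  have all3: "A \<subseteq> f U3 \<and> f U3 \<subseteq> J" using all U3h SU by blast
  obtain B' where B': "ls_base P' L' B'" and e: "f ` base_subset P L k B = base_subset P' L' k B'"
    using base_img[OF B] by blast
  have B'I: "ls_independent P' L' B'" using S2.base_D(1)[OF B'] .
  have B'P: "B' \<subseteq> P'" using S2.indep_sub_P[OF B'I] .
  have fB': "finite B'" using S2.base_card[OF B'] by blast
  define W1 where "W1 = B' \<inter> f U1"
  define W2 where "W2 = B' \<inter> f U2"
  define W3 where "W3 = B' \<inter> f U3"
  have fU1: "f U1 \<in> base_subset P' L' k B'" using U1b e by blast
  have fU2: "f U2 \<in> base_subset P' L' k B'" using U2b e by blast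
  have fU3: "f U3 \<in> base_subset P' L' k B'" using U3b e by blast
  have r1: "f U1 = ls_span P' L' W1" "card W1 = k + 1" using S2.bsub_repr[OF B' fU1] W1_def by blast+
  have r2: "f U2 = ls_span P' L' W2" "card W2 = k + 1" using S2.bsub_repr[OF B' fU2] W2_def by blast+
  have r3: "f U3 = ls_span P' L' W3" "card W3 = k + 1" using S2.bsub_repr[OF B' fU3] W3_def by blast+
  have W1B: "W1 \<subseteq> B'" and W2B: "W2 \<subseteq> B'" and W3B: "W3 \<subseteq> B'" using W1_def W2_def W3_def by blast+
  have cW12: "card (W1 \<inter> W2) = k" using adj_pres[OF B B' e Z1B Z2B cZ1 cZ2 c12] W1_def W2_def U1_def U2_def by simp
  have cW13: "card (W1 \<inter> W3) = k" using adj_pres[OF B B' e Z1B Z3B cZ1 cZ3 c13] W1_def W3_def U1_def U3_def by simp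
  have sI12: "f U1 \<inter> f U2 = ls_span P' L' (W1 \<inter> W2)" using S2.span_inter_indep[OF B'I W1B W2B] r1 r2 by simp
  have sI13: "f U1 \<inter> f U3 = ls_span P' L' (W1 \<inter> W3)" using S2.span_inter_indep[OF B'I W1B W3B] r1 r3 by simp
  have "W1 \<inter> W2 \<subseteq> B'" using W1B by blast
  then have iW12: "ls_independent P' L' (W1 \<inter> W2)" by (rule S2.indep_subset[OF B'I])
  have "W1 \<inter> W3 \<subseteq> B'" using W1B by blast
  then have iW13: "ls_independent P' L' (W1 \<inter> W3)" by (rule S2.indep_subset[OF B'I])
  have hW12: "ls_has_dim P' L' (ls_span P' L' (W1 \<inter> W2)) (k - 1)" using S2.imp_hdim[OF iW12] cW12 kk by simp
  have hW13: "ls_has_dim P' L' (ls_span P' L' (W1 \<inter> W3)) (k - 1)" using S2.imp_hdim[OF iW13] cW13 kk by simp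
  have "A \<subseteq> ls_span P' L' (W1 \<inter> W2)" using all1 all2 sI12 by blast
  then have A12: "A = ls_span P' L' (W1 \<inter> W2)" using S2.dim_eq_sub[OF A hW12] by blast
  have "A \<subseteq> ls_span P' L' (W1 \<inter> W3)" using all1 all3 sI13 by blast
  then have A13: "A = ls_span P' L' (W1 \<inter> W3)" using S2.dim_eq_sub[OF A hW13] by blast
  have WW: "W1 \<inter> W2 = W1 \<inter> W3"
  proof -
    have s12: "W1 \<inter> W2 \<subseteq> B'" using W1B by blast
    have s13: "W1 \<inter> W3 \<subseteq> B'" using W1B by blast
    have "W1 \<inter> W2 = B' \<inter> ls_span P' L' (W1 \<inter> W2)" using S2.indep_span_inter[OF B'I s12] by simp
    also have "\<dots> = B' \<inter> A" using A12 by simp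
    also have "\<dots> = B' \<inter> ls_span P' L' (W1 \<inter> W3)" using A13 by simp
    also have "\<dots> = W1 \<inter> W3" using S2.indep_span_inter[OF B'I s13] by simp
    finally show ?thesis .
  qed
  have W1P: "W1 \<subseteq> P'" using W1B B'P by blast
  have W2P: "W2 \<subseteq> P'" using W2B B'P by blast
  have W3P: "W3 \<subseteq> P'" using W3B B'P by blast
  have fW1: "finite W1" and fW2: "finite W2" and fW3: "finite W3" using W1B W2B W3B fB' finite_subset by blast+
  have eU: "ls_span P' L' (f U1 \<union> f U2) = ls_span P' L' (W1 \<union> W2)"
    using S2.span_Un_span[OF W1P W2P] r1 r2 by simp
  have "card (W1 \<union> W2) + card (W1 \<inter> W2) = card W1 + card W2" using card_Un_Int[OF fW1 fW2] by simp
  then have cU: "card (W1 \<union> W2) = (k + 1) + 1" using r1 r2 cW12 by simp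
  have "W1 \<union> W2 \<subseteq> B'" using W1B W2B by (rule Un_least)
  then have iU: "ls_independent P' L' (W1 \<union> W2)" by (rule S2.indep_subset[OF B'I])
  have hU: "ls_has_dim P' L' (ls_span P' L' (W1 \<union> W2)) (k + 1)" using S2.imp_hdim[OF iU cU] .
  have "f U1 \<union> f U2 \<subseteq> J" using all1 all2 by blast
  then have "ls_span P' L' (f U1 \<union> f U2) \<subseteq> J" using S2.span_least[OF S2.hdim_subsp[OF J]] by blast
  then have JU: "ls_span P' L' (W1 \<union> W2) = J" using eU S2.dim_eq_sub[OF hU J] by simp
  have "W3 \<subseteq> f U3" using r3 S2.span_sup[OF W3P] by simp
  then have "W3 \<subseteq> B' \<inter> ls_span P' L' (W1 \<union> W2)" using all3 JU W3B by blast
  also have "\<dots> = W1 \<union> W2" using S2.indep_span_inter[OF B'I] W1B W2B by (meson Un_least)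
  finally have W3U: "W3 \<subseteq> W1 \<union> W2" .
  have "W3 \<subseteq> W2"
  proof
    fix z assume z: "z \<in> W3"
    show "z \<in> W2"
    proof (cases "z \<in> W1")
      case True
      then have "z \<in> W1 \<inter> W3" using z by blast
      then show ?thesis using WW by blast
    next
      case False
      then show ?thesis using z W3U by blast
    qed
  qed
  then have "W3 = W2" using card_subset_eq[OF fW2] r2 r3 by simp
  then have "f U3 = f U2" using r2 r3 by simp
  moreover have "U2 \<in> Grass P L k" "U3 \<in> Grass P L k" using U2h U3h unfolding Grass_def by blast+
  ultimately have "U3 = U2" using inj_onD[OF finj] by blast
  then have "Z3 = Z2"
  proof -
    have "Z3 = B \<inter> U3" using S1.indep_span_inter[OF BI Z3B] U3_def by simp
    also have "\<dots> = B \<inter> U2" using \<open>U3 = U2\<close> by simp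
    also have "\<dots> = Z2" using S1.indep_span_inter[OF BI Z2B] U2_def by simp
    finally show ?thesis .
  qed
  then have "a3 \<in> insert a2 Y" using Z3_def Z2_def by blast
  then show False using a23 a3Y by blast
qed

end

context setting begin

lemma star_two:
  assumes S: "ls_has_dim P L S (k - 1)"
  shows "\<exists>U1 U2. ls_has_dim P L U1 k \<and> ls_has_dim P L U2 k \<and> S \<subseteq> U1 \<and> S \<subseteq> U2 \<and> U1 \<noteq> U2"
proof -
  have kk: "Suc (k - 1) = k" "k - 1 + 1 = k" using k1 by simp_all
  have lt0: "k - 1 < n" "k < n" using kn k1 by simp_all
  obtain Y where Y: "ls_independent P L Y" "card Y = k - 1 + 1" "ls_span P L Y = S" using S1.hdim_imp[OF S] by blast
  have YP: "Y \<subseteq> P" using S1.indep_sub_P[OF Y(1)] .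
  have YS: "Y \<subseteq> S" using S1.span_sup[OF YP] Y(3) by simp
  have fY: "finite Y" using S1.indep_finite[OF Y(1)] .
  have cY: "card Y = k" using Y kk by simp
  obtain a1 where a1: "a1 \<in> P" "a1 \<notin> S" using S1.exists_outside[OF S lt0(1)] by blast
  define Z1 where "Z1 = insert a1 Y"
  have i1: "ls_independent P L Z1" using S1.indep_insert[OF Y(1) a1(1)] a1 Y(3) Z1_def by simp
  have a1Y: "a1 \<notin> Y" using a1 YS by blast
  have cZ1: "card Z1 = k + 1" using Z1_def a1Y fY cY by simp
  have h1: "ls_has_dim P L (ls_span P L Z1) k" using S1.imp_hdim[OF i1 cZ1] .
  obtain a2 where a2: "a2 \<in> P" "a2 \<notin> ls_span P L Z1" using S1.exists_outside[OF h1 lt0(2)] by blast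
  have Z1P: "Z1 \<subseteq> P" using S1.indep_sub_P[OF i1] .
  have "Y \<subseteq> Z1" using Z1_def by blast
  then have SZ1: "S \<subseteq> ls_span P L Z1" using S1.span_mono[OF _ Z1P] Y(3) by blast
  define Z2 where "Z2 = insert a2 Y"
  have i2: "ls_independent P L Z2" using S1.indep_insert[OF Y(1) a2(1)] a2 SZ1 Y(3) Z2_def by blast
  have a2Y: "a2 \<notin> Y" using a2 SZ1 YS by blast
  have cZ2: "card Z2 = k + 1" using Z2_def a2Y fY cY by simp
  have h2: "ls_has_dim P L (ls_span P L Z2) k" using S1.imp_hdim[OF i2 cZ2] .
  have Z2P: "Z2 \<subseteq> P" using S1.indep_sub_P[OF i2] .
  have "Y \<subseteq> Z2" using Z2_def by blast
  then have SZ2: "S \<subseteq> ls_span P L Z2" using S1.span_mono[OF _ Z2P] Y(3) by blast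
  have "a2 \<in> ls_span P L Z2" using S1.span_sup[OF Z2P] Z2_def by blast
  then have "ls_span P L Z1 \<noteq> ls_span P L Z2" using a2 by blast
  then show ?thesis using h1 h2 SZ1 SZ2 by blast
qed

lemma star_exists:
  assumes S: "ls_has_dim P L S (k - 1)"
  shows "\<exists>S'. (ls_has_dim P' L' S' (k - 1) \<or> ls_has_dim P' L' S' (k + 1)) \<and>
           f ` Grass_inc P L k S \<subseteq> Grass_inc P' L' k S'"
proof -
  obtain U1 U2 where U: "ls_has_dim P L U1 k" "ls_has_dim P L U2 k" "S \<subseteq> U1" "S \<subseteq> U2" "U1 \<noteq> U2"
    using star_two[OF S] by blast
  define \<V> where "\<V> = f ` {U. ls_has_dim P L U k \<and> S \<subseteq> U}"
  have fGr: "ls_has_dim P' L' (f U) k" if "ls_has_dim P L U k" for U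
    using fG that unfolding Grass_def by blast
  have VV: "\<forall>V\<in>\<V>. ls_has_dim P' L' V k" using fGr \<V>_def by blast
  have pw: "\<forall>V\<in>\<V>. \<forall>W\<in>\<V>. V \<noteq> W \<longrightarrow> S2.adj k V W"
  proof (intro ballI impI)
    fix V W assume VW: "V \<in> \<V>" "W \<in> \<V>" "V \<noteq> W"
    then obtain U U' where UU: "ls_has_dim P L U k" "S \<subseteq> U" "V = f U" "ls_has_dim P L U' k" "S \<subseteq> U'" "W = f U'"
      unfolding \<V>_def by blast
    then have "U \<noteq> U'" using VW by blast
    then show "S2.adj k V W" using star_adj[OF S UU(1,2) UU(4,5)] UU by simp
  qed
  have V1: "f U1 \<in> \<V>" and V2: "f U2 \<in> \<V>" using U \<V>_def by blast+
  have G12: "U1 \<in> Grass P L k" "U2 \<in> Grass P L k" using U unfolding Grass_def by blast+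
  have neq: "f U1 \<noteq> f U2" using inj_onD[OF finj _ G12] U(5) by blast
  have a12: "S2.adj k (f U1) (f U2)" using pw V1 V2 neq by blast
  have hA: "ls_has_dim P' L' (f U1 \<inter> f U2) (k - 1)" using a12 unfolding S2.adj_def by blast
  have hJ: "ls_has_dim P' L' (ls_span P' L' (f U1 \<union> f U2)) (k + 1)" using a12 unfolding S2.adj_def by blast
  have cl: "(\<forall>V\<in>\<V>. f U1 \<inter> f U2 \<subseteq> V) \<or> (\<forall>V\<in>\<V>. V \<subseteq> ls_span P' L' (f U1 \<union> f U2))"
    using S2.clique[OF k1 VV pw V1 V2 neq] .
  show ?thesis
  proof (cases "\<forall>V\<in>\<V>. f U1 \<inter> f U2 \<subseteq> V")
    case True
    have "f ` Grass_inc P L k S \<subseteq> Grass_inc P' L' k (f U1 \<inter> f U2)"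
    proof
      fix x assume "x \<in> f ` Grass_inc P L k S"
      then obtain U where U: "U \<in> Grass_inc P L k S" "x = f U" by blast
      then have UU: "ls_has_dim P L U k" "S \<subseteq> U" using S1.Grass_inc_low[OF S k1] by blast+
      then have "x \<in> \<V>" using U \<V>_def by blast
      then have "f U1 \<inter> f U2 \<subseteq> x" "ls_has_dim P' L' x k" using True VV by blast+
      then show "x \<in> Grass_inc P' L' k (f U1 \<inter> f U2)" using S2.Grass_inc_low[OF hA k1] by blast
    qed
    then show ?thesis using hA by blast
  next
    case False
    then have F: "\<forall>V\<in>\<V>. V \<subseteq> ls_span P' L' (f U1 \<union> f U2)" using cl by blast
    have "f ` Grass_inc P L k S \<subseteq> Grass_inc P' L' k (ls_span P' L' (f U1 \<union> f U2))"
    proof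
      fix x assume "x \<in> f ` Grass_inc P L k S"
      then obtain U where U: "U \<in> Grass_inc P L k S" "x = f U" by blast
      then have UU: "ls_has_dim P L U k" "S \<subseteq> U" using S1.Grass_inc_low[OF S k1] by blast+
      then have "x \<in> \<V>" using U \<V>_def by blast
      then have "x \<subseteq> ls_span P' L' (f U1 \<union> f U2)" "ls_has_dim P' L' x k" using F VV by blast+
      then show "x \<in> Grass_inc P' L' k (ls_span P' L' (f U1 \<union> f U2))" using S2.Grass_inc_high[OF hJ] by blast
    qed
    then show ?thesis using hJ by blast
  qed
qed

lemma Gi_img:
  assumes S: "ls_has_dim P L S (k - 1)" and sub: "f ` Grass_inc P L k S \<subseteq> Grass_inc P' L' k S'"
    and U: "ls_has_dim P L U k" "S \<subseteq> U"
  shows "f U \<in> Grass_inc P' L' k S'"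
proof -
  have "U \<in> Grass_inc P L k S" using S1.Grass_inc_low[OF S k1] U by blast
  then show ?thesis using sub by blast
qed

lemma star_unique:
  assumes S: "ls_has_dim P L S (k - 1)"
    and T1: "(ls_has_dim P' L' A (k - 1) \<or> ls_has_dim P' L' A (k + 1)) \<and> f ` Grass_inc P L k S \<subseteq> Grass_inc P' L' k A"
    and T2: "(ls_has_dim P' L' C (k - 1) \<or> ls_has_dim P' L' C (k + 1)) \<and> f ` Grass_inc P L k S \<subseteq> Grass_inc P' L' k C"
  shows "A = C"
proof -
  obtain U1 U2 where U: "ls_has_dim P L U1 k" "ls_has_dim P L U2 k" "S \<subseteq> U1" "S \<subseteq> U2" "U1 \<noteq> U2"
    using star_two[OF S] by blast
  have a12: "S2.adj k (f U1) (f U2)" using star_adj[OF S U(1,3) U(2,4) U(5)] .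
  have hA: "ls_has_dim P' L' (f U1 \<inter> f U2) (k - 1)" using a12 unfolding S2.adj_def by blast
  have hJ: "ls_has_dim P' L' (ls_span P' L' (f U1 \<union> f U2)) (k + 1)" using a12 unfolding S2.adj_def by blast
  have fU1P: "f U1 \<subseteq> P'" using fG U(1) S2.hdim_P unfolding Grass_def by blast
  have fU2P: "f U2 \<subseteq> P'" using fG U(2) S2.hdim_P unfolding Grass_def by blast
  have low: "X = f U1 \<inter> f U2" if X: "ls_has_dim P' L' X (k - 1)" "f ` Grass_inc P L k S \<subseteq> Grass_inc P' L' k X" for X
  proof -
    have "f U1 \<in> Grass_inc P' L' k X" "f U2 \<in> Grass_inc P' L' k X" using Gi_img[OF S X(2)] U by blast+
    then have "X \<subseteq> f U1 \<inter> f U2" using S2.Grass_inc_low[OF X(1) k1] by blast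
    then show ?thesis using S2.dim_eq_sub[OF X(1) hA] by blast
  qed
  have high: "X = ls_span P' L' (f U1 \<union> f U2)" if X: "ls_has_dim P' L' X (k + 1)" "f ` Grass_inc P L k S \<subseteq> Grass_inc P' L' k X" for X
  proof -
    have "f U1 \<in> Grass_inc P' L' k X" "f U2 \<in> Grass_inc P' L' k X" using Gi_img[OF S X(2)] U by blast+
    then have "f U1 \<union> f U2 \<subseteq> X" using S2.Grass_inc_high[OF X(1)] by blast
    then have "ls_span P' L' (f U1 \<union> f U2) \<subseteq> X" using S2.span_least[OF S2.hdim_subsp[OF X(1)]] by blast
    then show ?thesis using S2.dim_eq_sub[OF hJ X(1)] by blast
  qed
  have mixed: False if X: "ls_has_dim P' L' X (k - 1)" "f ` Grass_inc P L k S \<subseteq> Grass_inc P' L' k X"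
     and Y: "ls_has_dim P' L' Y (k + 1)" "f ` Grass_inc P L k S \<subseteq> Grass_inc P' L' k Y" for X Y
  proof -
    have "\<forall>U. ls_has_dim P L U k \<and> S \<subseteq> U \<longrightarrow> X \<subseteq> f U \<and> f U \<subseteq> Y"
    proof (intro allI impI)
      fix U assume U: "ls_has_dim P L U k \<and> S \<subseteq> U"
      have "f U \<in> Grass_inc P' L' k X" "f U \<in> Grass_inc P' L' k Y" using Gi_img[OF S X(2)] Gi_img[OF S Y(2)] U by blast+
      then show "X \<subseteq> f U \<and> f U \<subseteq> Y" using S2.Grass_inc_low[OF X(1) k1] S2.Grass_inc_high[OF Y(1)] by blast
    qed
    then show False using no_pencil[OF S X(1) Y(1)] by blast
  qed
  show ?thesis
  proof (cases "ls_has_dim P' L' A (k - 1)")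
    case A1: True
    show ?thesis
    proof (cases "ls_has_dim P' L' C (k - 1)")
      case True
      then show ?thesis using low[OF A1 conjunct2[OF T1]] low[OF True conjunct2[OF T2]] by simp
    next
      case False
      then have "ls_has_dim P' L' C (k + 1)" using T2 by blast
      have False using mixed[OF A1 conjunct2[OF T1] \<open>ls_has_dim P' L' C (k + 1)\<close> conjunct2[OF T2]] .
      then show ?thesis ..
    qed
  next
    case A2: False
    then have A3: "ls_has_dim P' L' A (k + 1)" using T1 by blast
    show ?thesis
    proof (cases "ls_has_dim P' L' C (k - 1)")
      case True
      have False using mixed[OF True conjunct2[OF T2] A3 conjunct2[OF T1]] .
      then show ?thesis ..
    next
      case False
      then have "ls_has_dim P' L' C (k + 1)" using T2 by blast
      then show ?thesis using high[OF A3 conjunct2[OF T1]] high[OF \<open>ls_has_dim P' L' C (k + 1)\<close> conjunct2[OF T2]] by simp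
    qed
  qed
qed

lemma f_lower_spec:
  assumes S: "ls_has_dim P L S (k - 1)"
  shows "(ls_has_dim P' L' (f_lower P L P' L' k f S) (k - 1) \<or> ls_has_dim P' L' (f_lower P L P' L' k f S) (k + 1))
     \<and> f ` Grass_inc P L k S \<subseteq> Grass_inc P' L' k (f_lower P L P' L' k f S)"
proof -
  obtain S0 where S0: "(ls_has_dim P' L' S0 (k - 1) \<or> ls_has_dim P' L' S0 (k + 1)) \<and>
           f ` Grass_inc P L k S \<subseteq> Grass_inc P' L' k S0" using star_exists[OF S] by blast
  have "\<exists>!S'. (ls_has_dim P' L' S' (k - 1) \<or> ls_has_dim P' L' S' (k + 1)) \<and>
           f ` Grass_inc P L k S \<subseteq> Grass_inc P' L' k S'"
  proof (rule ex1I[of _ S0])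
    show "(ls_has_dim P' L' S0 (k - 1) \<or> ls_has_dim P' L' S0 (k + 1)) \<and>
           f ` Grass_inc P L k S \<subseteq> Grass_inc P' L' k S0" by (rule S0)
    fix y assume "(ls_has_dim P' L' y (k - 1) \<or> ls_has_dim P' L' y (k + 1)) \<and>
           f ` Grass_inc P L k S \<subseteq> Grass_inc P' L' k y"
    then show "y = S0" by (rule star_unique[OF S _ S0])
  qed
  then show ?thesis unfolding f_lower_def by (rule theI')
qed

end

lemma se_inj: "strong_embedding P L P' L' g \<Longrightarrow> inj_on g P"
  by (simp add: strong_embedding_def)

lemma se_P: "strong_embedding P L P' L' g \<Longrightarrow> g ` P \<subseteq> P'"
  by (simp add: strong_embedding_def)

lemma se_col: "strong_embedding P L P' L' g \<Longrightarrow> a \<in> P \<Longrightarrow> b \<in> P \<Longrightarrow> c \<in> P \<Longrightarrow>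
    ls_collinear L {a, b, c} \<Longrightarrow> ls_collinear L' {g a, g b, g c}"
  unfolding strong_embedding_def by (drule conjunct2, drule conjunct2, drule conjunct1) blast

lemma se_ind: "strong_embedding P L P' L' g \<Longrightarrow> X \<subseteq> P \<Longrightarrow> ls_independent P L X \<Longrightarrow>
    ls_independent P' L' (g ` X)"
  unfolding strong_embedding_def by (drule conjunct2, drule conjunct2, drule conjunct2, drule conjunct2) blast

context setting begin

lemma emb_span:
  assumes g: "strong_embedding P L P' L' g" and X: "X \<subseteq> P"
  shows "g ` ls_span P L X \<subseteq> ls_span P' L' (g ` X)"
proof -
  have inj: "inj_on g P" using se_inj[OF g] .
  have gP: "g ` P \<subseteq> P'" using se_P[OF g] .
  have gXP: "g ` X \<subseteq> P'" using X gP by blast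
  define Q where "Q = {p \<in> P. g p \<in> ls_span P' L' (g ` X)}"
  have sQ: "ls_subspace P L Q"
    unfolding ls_subspace_def
  proof (intro conjI ballI impI)
    show "Q \<subseteq> P" using Q_def by blast
    fix p q assume pq: "p \<in> Q" "q \<in> Q" "p \<noteq> q"
    have pP: "p \<in> P" and qP: "q \<in> P" using pq Q_def by blast+
    have lp: "ls_line L p q \<in> L \<and> p \<in> ls_line L p q \<and> q \<in> ls_line L p q" using S1.line_props[OF pP qP pq(3)] .
    show "ls_line L p q \<subseteq> Q"
    proof
      fix r assume r: "r \<in> ls_line L p q"
      have rP: "r \<in> P" using r lp S1.lines_sub by blast
      have "ls_collinear L {p, q, r}" unfolding ls_collinear_def using lp r by blast
      then have "ls_collinear L' {g p, g q, g r}" using se_col[OF g pP qP rP] by blast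
      then obtain l' where l': "l' \<in> L'" "g p \<in> l'" "g q \<in> l'" "g r \<in> l'" unfolding ls_collinear_def by blast
      have gpq: "g p \<noteq> g q" using inj pP qP pq(3) inj_on_def by metis
      have ll: "ls_line L' (g p) (g q) = l'" using S2.line_unique[OF l'(1,2,3) gpq] .
      have gpP: "g p \<in> P'" using gP pP by blast
      have gqP: "g q \<in> P'" using gP qP by blast
      have gps: "g p \<in> ls_span P' L' (g ` X)" using pq(1) Q_def by blast
      have gqs: "g q \<in> ls_span P' L' (g ` X)" using pq(2) Q_def by blast
      have "ls_line L' (g p) (g q) \<subseteq> ls_span P' L' (g ` X)"
        using S2.line_in_span[OF gpP gqP gpq gXP gps gqs] .
      then have "g r \<in> ls_span P' L' (g ` X)" using l'(4) ll by blast
      then show "r \<in> Q" using rP Q_def by blast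
    qed
  qed
  have "X \<subseteq> Q" using X S2.span_sup[OF gXP] Q_def by blast
  then have "ls_span P L X \<subseteq> Q" using S1.span_least[OF sQ] by blast
  then show ?thesis using Q_def by blast
qed

lemma emb_dim:
  assumes g: "strong_embedding P L P' L' g" and X: "ls_independent P L X" "card X = m + 1"
  shows "ls_has_dim P' L' (ls_span P' L' (g ` ls_span P L X)) m \<and>
         ls_span P' L' (g ` ls_span P L X) = ls_span P' L' (g ` X)"
proof -
  have inj: "inj_on g P" using se_inj[OF g] .
  have gP: "g ` P \<subseteq> P'" using se_P[OF g] .
  have XP: "X \<subseteq> P" using S1.indep_sub_P[OF X(1)] .
  have gXP: "g ` X \<subseteq> P'" using XP gP by blast
  have gi: "ls_independent P' L' (g ` X)" using se_ind[OF g XP X(1)] .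
  have "card (g ` X) = card X" using card_image[OF inj_on_subset[OF inj XP]] .
  then have h: "ls_has_dim P' L' (ls_span P' L' (g ` X)) m" using S2.imp_hdim[OF gi] X(2) by simp
  have "g ` ls_span P L X \<subseteq> ls_span P' L' (g ` X)" using emb_span[OF g XP] .
  then have s1: "ls_span P' L' (g ` ls_span P L X) \<subseteq> ls_span P' L' (g ` X)" using S2.span_sub_span[OF _ gXP] by blast
  have "X \<subseteq> ls_span P L X" using S1.span_sup[OF XP] .
  moreover have "g ` ls_span P L X \<subseteq> P'" using S1.span_P[OF XP] gP by blast
  ultimately have s2: "ls_span P' L' (g ` X) \<subseteq> ls_span P' L' (g ` ls_span P L X)"
    using S2.span_mono[of "g ` X" "g ` ls_span P L X"] by blast
  have eq: "ls_span P' L' (g ` ls_span P L X) = ls_span P' L' (g ` X)" using s1 s2 by (rule subset_antisym)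
  show ?thesis using h eq by simp
qed

lemma main:
  assumes g: "strong_embedding P L P' L' g"
    and hyp: "\<forall>S \<in> Grass P L (k - 1). f_lower P L P' L' k f S = ls_span P' L' (g ` S)"
    and U: "U \<in> Grass P L k"
  shows "f U = ls_span P' L' (g ` U)"
proof -
  have kk: "k - 1 + 1 = k" using k1 by simp
  have hU: "ls_has_dim P L U k" using U unfolding Grass_def by blast
  obtain X where X: "ls_independent P L X" "card X = k + 1" "ls_span P L X = U" using S1.hdim_imp[OF hU] by blast
  have XP: "X \<subseteq> P" using S1.indep_sub_P[OF X(1)] .
  have fX: "finite X" using S1.indep_finite[OF X(1)] .
  have hfU: "ls_has_dim P' L' (f U) k" using fG U unfolding Grass_def by blast
  have gP: "g ` P \<subseteq> P'" using se_P[OF g] .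
  have gXU: "g ` X \<subseteq> f U"
  proof
    fix z assume "z \<in> g ` X"
    then obtain x where x: "x \<in> X" "z = g x" by blast
    have "card (X - {x}) = k" using X(2) x fX by (simp add: card_Diff_singleton)
    then have "card (X - {x}) \<noteq> 0" using k1 by simp
    then have "X - {x} \<noteq> {}" by (metis card.empty)
    then obtain y where y: "y \<in> X" "y \<noteq> x" by blast
    define Y where "Y = X - {y}"
    define S where "S = ls_span P L Y"
    have YX: "Y \<subseteq> X" using Y_def by blast
    have iY: "ls_independent P L Y" using S1.indep_subset[OF X(1) YX] .
    have cY: "card Y = k - 1 + 1" using Y_def X(2) y fX kk by (simp add: card_Diff_singleton)
    have hS: "ls_has_dim P L S (k - 1)" using S1.imp_hdim[OF iY cY] S_def by simp
    have SU: "S \<subseteq> U" using S1.span_mono[OF YX XP] S_def X(3) by simp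
    have "S \<in> Grass P L (k - 1)" using hS unfolding Grass_def by blast
    then have fl: "f_lower P L P' L' k f S = ls_span P' L' (g ` S)" using hyp by blast
    have spec: "f ` Grass_inc P L k S \<subseteq> Grass_inc P' L' k (f_lower P L P' L' k f S)"
      using f_lower_spec[OF hS] by blast
    have "U \<in> Grass_inc P L k S" using S1.Grass_inc_low[OF hS k1] hU SU by blast
    then have "f U \<in> Grass_inc P' L' k (f_lower P L P' L' k f S)" using spec by blast
    then have fU: "f U \<in> Grass_inc P' L' k (ls_span P' L' (g ` S))" using fl by simp
    have hgS: "ls_has_dim P' L' (ls_span P' L' (g ` S)) (k - 1)" using emb_dim[OF g iY cY] S_def by blast
    have sub: "ls_span P' L' (g ` S) \<subseteq> f U" using fU S2.Grass_inc_low[OF hgS k1] by blast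
    have YP: "Y \<subseteq> P" using YX XP by blast
    have xS: "x \<in> S" using S1.span_sup[OF YP] S_def Y_def x y by blast
    have gSP: "g ` S \<subseteq> P'" using S1.span_P[OF YP] S_def gP by blast
    have "g x \<in> ls_span P' L' (g ` S)" using xS S2.span_sup[OF gSP] by blast
    then show "z \<in> f U" using sub x by blast
  qed
  have "ls_span P' L' (g ` X) \<subseteq> f U" using S2.span_least[OF S2.hdim_subsp[OF hfU] gXU] .
  moreover have e: "ls_has_dim P' L' (ls_span P' L' (g ` U)) k \<and> ls_span P' L' (g ` U) = ls_span P' L' (g ` X)"
    using emb_dim[OF g X(1,2)] unfolding X(3) .
  ultimately have "ls_span P' L' (g ` U) \<subseteq> f U" by simp
  then show ?thesis using S2.dim_eq_sub[OF _ hfU] e by blast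
qed

end

theorem lemma2p9:
  fixes P :: "'p set" and L :: "'p set set" and P' :: "'q set" and L' :: "'q set set"
    and n k :: nat and f :: "'p set \<Rightarrow> 'q set" and g :: "'p \<Rightarrow> 'q"
  assumes "linear_space P L" and "linear_space P' L'"
    and "ls_has_dim P L P n" and "ls_has_dim P' L' P' n"
    and "exchange_axiom P L" and "exchange_axiom P' L'"
    and "axiom_P2 L" and "axiom_P2 L'"
    and "k \<ge> 1" and "n \<ge> 2 * k + 1"
    and "inj_on f (Grass P L k)" and "f ` Grass P L k \<subseteq> Grass P' L' k"
    and "\<forall>\<B>. is_base_subset P L k \<B> \<longrightarrow> is_base_subset P' L' k (f ` \<B>)"
    and "strong_embedding P L P' L' g"
    and "\<forall>S \<in> Grass P L (k - 1). f_lower P L P' L' k f S = ls_span P' L' (g ` S)"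
  shows "\<forall>U \<in> Grass P L k. f U = ls_span P' L' (g ` U)"
proof -
  interpret setting P L P' L' n k f
    by (unfold_locales) (use assms in auto)
  show ?thesis using main[OF assms(14) assms(15)] by blast
qed

end
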